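(* Assume that $K$ is a field and $M$ is an asymptotic scale. (1) Let $F \in K((M))^{\text{ls}}$ be nonzero. Then there are a nonzero $a \in K$ and an $E \in K[[M]]^{\text{ls}}$ such that $\operatorname{lm}(E)$ is small and $F = a \operatorname{lm}(F) (1-E)$. (2) $K((M))^{\text{ls}}$ is the fraction field of $K[[M]]^{\text{ps}}$ in $K((M))$.
   Context: Let $\mathcal{H}$ be the Hardy field of all germs at $+\infty$ of unary functions definable in the o-minimal structure $\mathbb{R}_{\text{an},\exp}$, and $\mathcal{H}^{>0}=\{h\in\mathcal{H}: h>0\}$. Let $M$ be a multiplicative $\mathbb{R}$-vector subspace of $\mathcal{H}^{>0}$ and $K$ a commutative ring of characteristic 0 with unit. A germ is small if it tends to $0$ at $+\infty$. For germs $f,g$, $f\preceq g$ means $f=O(g)$ and $f\asymp g$ means $f\preceq g$ and $g\preceq f$. $M$ is an asymptotic scale if, for $m\in M$, $m\asymp 1$ implies $m=1$. $K((M))$ denotes the ring of generalized series $\sum_{m\in M} a_m m$ with $a_m\in K$ and reverse-well-ordered support $\{m: a_m\neq 0\}$; $\operatorname{lm}(F)$ denotes the leading (largest) monomial of the support of $F$. A generalized power series over $K$ is a series $G=\sum_{\alpha\in[0,\infty)^{k+1}} a_\alpha X^\alpha$ in $X=(X_0,\dots,X_k)$ whose support is contained in a cartesian product of well-ordered subsets of $\mathbb{R}$; its support is natural if for every $a>0$ each coordinate projection of the support meets $[0,a)$ in a finite set. An $M$-generalized power series over $K$ is a series $G(m_0,\dots,m_k)$ with $G$ a generalized power series over $K$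 with natural support and $m_0,\dots,m_k\in M$ small; $K[[M]]^{\text{ps}}$ denotes the subring of $K((M))$ of all such series. An $M$-generalized Laurent series is a series $nF$ with $F$ an $M$-generalized power series with generating monomials $m_0,\dots,m_k$ and $n$ in the multiplicative $\mathbb{R}$-vector space generated by $m_0,\dots,m_k$; $K((M))^{\text{ls}}$ denotes the subring of $K((M))$ of all $M$-generalized Laurent series. *)

theory Defs
  imports Complex_Main
begin

definition germ_eq :: "(real \<Rightarrow> real) \<Rightarrow> (real \<Rightarrow> real) \<Rightarrow> bool" where
  "germ_eq f g \<longleftrightarrow> eventually (\<lambda>x. f x = g x) at_top"

lemma germ_eq_equivp: "equivp germ_eq"
proof (rule equivpI)
  show "reflp germ_eq" by (rule reflpI) (simp add: germ_eq_def)
  show "symp germ_eq" by (rule sympI) (auto simp: germ_eq_def elim: eventually_mono)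
  show "transp germ_eq"
    by (rule transpI) (auto simp: germ_eq_def elim: eventually_elim2)
qed

quotient_type germ = "real \<Rightarrow> real" / germ_eq
  by (rule germ_eq_equivp)

instantiation germ :: comm_monoid_mult
begin
lift_definition times_germ :: "germ \<Rightarrow> germ \<Rightarrow> germ" is "\<lambda>f g x. f x * g x"
  by (auto simp: germ_eq_def elim: eventually_elim2)
lift_definition one_germ :: germ is "\<lambda>x. 1" .
instance
proof
  fix a b c :: germ
  show "a * b * c = a * (b * c)" by transfer (simp add: germ_eq_def mult.assoc)
  show "a * b = b * a" by transfer (simp add: germ_eq_def mult.commute)
  show "1 * a = a" by transfer (simp add: germ_eq_def)
qed
end

text \<open>Real power of a germ (the R-vector space structure of a multiplicative group of
  positive germs).\<close>
lift_definition gpowr :: "germ \<Rightarrow> real \<Rightarrow> germ" is "\<lambda>f r x. f x powr r"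
  by (auto simp: germ_eq_def elim: eventually_mono)

lift_definition gpos :: "germ \<Rightarrow> bool" is "\<lambda>f. eventually (\<lambda>x. f x > 0) at_top"
proof -
  fix f g :: "real \<Rightarrow> real"
  assume "germ_eq f g"
  then have e: "eventually (\<lambda>x. f x = g x) at_top" unfolding germ_eq_def .
  show "eventually (\<lambda>x. f x > 0) at_top = eventually (\<lambda>x. g x > 0) at_top"
    by (rule eventually_subst) (rule eventually_mono[OF e], simp)
qed

lift_definition gsmall :: "germ \<Rightarrow> bool" is "\<lambda>f. (f \<longlongrightarrow> 0) at_top"
proof -
  fix f g :: "real \<Rightarrow> real"
  assume "germ_eq f g"
  then have e: "eventually (\<lambda>x. f x = g x) at_top" unfolding germ_eq_def .
  show "(f \<longlongrightarrow> 0) at_top = (g \<longlongrightarrow> 0) at_top"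
    by (rule tendsto_cong[OF e])
qed

lift_definition gle :: "germ \<Rightarrow> germ \<Rightarrow> bool" (infix "\<preceq>" 50)
  is "\<lambda>f g. \<exists>c. eventually (\<lambda>x. \<bar>f x\<bar> \<le> c * \<bar>g x\<bar>) at_top"
proof -
  fix f1 f2 g1 g2 :: "real \<Rightarrow> real"
  assume "germ_eq f1 f2" "germ_eq g1 g2"
  then have e: "eventually (\<lambda>x. f1 x = f2 x \<and> g1 x = g2 x) at_top"
    unfolding germ_eq_def by (auto elim: eventually_elim2)
  show "(\<exists>c. eventually (\<lambda>x. \<bar>f1 x\<bar> \<le> c * \<bar>g1 x\<bar>) at_top) =
        (\<exists>c. eventually (\<lambda>x. \<bar>f2 x\<bar> \<le> c * \<bar>g2 x\<bar>) at_top)"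
  proof
    assume "\<exists>c. eventually (\<lambda>x. \<bar>f1 x\<bar> \<le> c * \<bar>g1 x\<bar>) at_top"
    then obtain c where "eventually (\<lambda>x. \<bar>f1 x\<bar> \<le> c * \<bar>g1 x\<bar>) at_top" by blast
    with e have "eventually (\<lambda>x. \<bar>f2 x\<bar> \<le> c * \<bar>g2 x\<bar>) at_top"
      by (auto elim: eventually_elim2)
    then show "\<exists>c. eventually (\<lambda>x. \<bar>f2 x\<bar> \<le> c * \<bar>g2 x\<bar>) at_top" by blast
  next
    assume "\<exists>c. eventually (\<lambda>x. \<bar>f2 x\<bar> \<le> c * \<bar>g2 x\<bar>) at_top"
    then obtain c where "eventually (\<lambda>x. \<bar>f2 x\<bar> \<le> c * \<bar>g2 x\<bar>) at_top" by blast
    with e have "eventually (\<lambda>x. \<bar>f1 x\<bar> \<le> c * \<bar>g1 x\<bar>) at_top"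
      by (auto elim: eventually_elim2)
    then show "\<exists>c. eventually (\<lambda>x. \<bar>f1 x\<bar> \<le> c * \<bar>g1 x\<bar>) at_top" by blast
  qed
qed

definition gasymp :: "germ \<Rightarrow> germ \<Rightarrow> bool" (infix "\<asymp>" 50) where
  "f \<asymp> g \<longleftrightarrow> f \<preceq> g \<and> g \<preceq> f"

text \<open>Hardy-type behaviour of a germ: it tends to 0, to +infinity, or to a positive
  real limit (this is what every positive germ in a Hardy field satisfies).\<close>
lift_definition ghardy_limit :: "germ \<Rightarrow> bool"
  is "\<lambda>f. (f \<longlongrightarrow> 0) at_top \<or> filterlim f at_top at_top \<or> (\<exists>c>0. (f \<longlongrightarrow> c) at_top)"
proof -
  fix f g :: "real \<Rightarrow> real"
  assume "germ_eq f g"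
  then have e: "eventually (\<lambda>x. f x = g x) at_top" unfolding germ_eq_def .
  have 1: "\<And>F. filterlim f F at_top = filterlim g F at_top"
    using e by (rule filterlim_cong[OF refl refl])
  show "((f \<longlongrightarrow> 0) at_top \<or> filterlim f at_top at_top \<or> (\<exists>c>0. (f \<longlongrightarrow> c) at_top)) =
        ((g \<longlongrightarrow> 0) at_top \<or> filterlim g at_top at_top \<or> (\<exists>c>0. (g \<longlongrightarrow> c) at_top))"
    by (simp only: 1)
qed

definition mult_R_subspace :: "germ set \<Rightarrow> bool" where
  "mult_R_subspace M \<longleftrightarrow>
     1 \<in> M \<and> (\<forall>m\<in>M. \<forall>n\<in>M. m * n \<in> M) \<and> (\<forall>m\<in>M. \<forall>r::real. gpowr m r \<in> M) \<and>
     (\<forall>m\<in>M. gpos m \<and> ghardy_limit m)"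

definition asymptotic_scale :: "germ set \<Rightarrow> bool" where
  "asymptotic_scale M \<longleftrightarrow> (\<forall>m\<in>M. m \<asymp> 1 \<longrightarrow> m = 1)"

text \<open>A generalized series is a coefficient function on germs; support in M and
  reverse-well-ordered (w.r.t. the dominance order): every nonempty subset of the
  support has a largest element.\<close>
definition supp :: "(germ \<Rightarrow> 'k::zero) \<Rightarrow> germ set" where
  "supp F = {m. F m \<noteq> 0}"

definition is_series :: "germ set \<Rightarrow> (germ \<Rightarrow> 'k::zero) \<Rightarrow> bool" where
  "is_series M F \<longleftrightarrow> supp F \<subseteq> M \<and>
     (\<forall>S \<subseteq> supp F. S \<noteq> {} \<longrightarrow> (\<exists>m\<in>S. \<forall>n\<in>S. n \<preceq> m))"

definition series_set :: "germ set \<Rightarrow> (germ \<Rightarrow> 'k::zero) set" where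
  "series_set M = {F. is_series M F}"

definition lm :: "(germ \<Rightarrow> 'k::zero) \<Rightarrow> germ" where
  "lm F = (THE m. F m \<noteq> 0 \<and> (\<forall>n. F n \<noteq> 0 \<longrightarrow> n \<preceq> m))"

definition mono_ser :: "'k::zero \<Rightarrow> germ \<Rightarrow> germ \<Rightarrow> 'k" where
  "mono_ser a m = (\<lambda>n. if n = m then a else 0)"

definition one_ser :: "germ \<Rightarrow> 'k::{zero,one}" where
  "one_ser = mono_ser 1 1"

definition ser_mult :: "(germ \<Rightarrow> 'k::comm_ring_1) \<Rightarrow> (germ \<Rightarrow> 'k) \<Rightarrow> germ \<Rightarrow> 'k" where
  "ser_mult F G = (\<lambda>m. \<Sum>(p, q) \<in> {(p, q). F p \<noteq> 0 \<and> G q \<noteq> 0 \<and> p * q = m}. F p * G q)"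

text \<open>Exponent vectors in k+1 variables: functions nat => real, nonnegative on
  indices 0..k and 0 beyond k.\<close>
definition well_ordered_real :: "real set \<Rightarrow> bool" where
  "well_ordered_real W \<longleftrightarrow> (\<forall>S \<subseteq> W. S \<noteq> {} \<longrightarrow> (\<exists>x\<in>S. \<forall>y\<in>S. x \<le> y))"

definition gen_power_series :: "nat \<Rightarrow> ((nat \<Rightarrow> real) \<Rightarrow> 'k::zero) \<Rightarrow> bool" where
  "gen_power_series k G \<longleftrightarrow>
     (\<forall>\<alpha>. G \<alpha> \<noteq> 0 \<longrightarrow> (\<forall>i\<le>k. 0 \<le> \<alpha> i) \<and> (\<forall>i>k. \<alpha> i = 0)) \<and>
     (\<exists>W :: nat \<Rightarrow> real set. (\<forall>i\<le>k. well_ordered_real (W i)) \<and>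
        (\<forall>\<alpha>. G \<alpha> \<noteq> 0 \<longrightarrow> (\<forall>i\<le>k. \<alpha> i \<in> W i)))"

definition natural_support :: "nat \<Rightarrow> ((nat \<Rightarrow> real) \<Rightarrow> 'k::zero) \<Rightarrow> bool" where
  "natural_support k G \<longleftrightarrow>
     (\<forall>a>0. \<forall>i\<le>k. finite ({\<alpha> i | \<alpha>. G \<alpha> \<noteq> 0} \<inter> {0..<a}))"

definition monom :: "nat \<Rightarrow> (nat \<Rightarrow> germ) \<Rightarrow> (nat \<Rightarrow> real) \<Rightarrow> germ" where
  "monom k m \<alpha> = (\<Prod>i\<le>k. gpowr (m i) (\<alpha> i))"

text \<open>The series G(m_0,...,m_k) in K((M)).\<close>
definition gps_eval :: "nat \<Rightarrow> ((nat \<Rightarrow> real) \<Rightarrow> 'k::comm_ring_1) \<Rightarrow> (nat \<Rightarrow> germ) \<Rightarrow> germ \<Rightarrow> 'k" where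
  "gps_eval k G m = (\<lambda>n. \<Sum>\<alpha> \<in> {\<alpha>. G \<alpha> \<noteq> 0 \<and> monom k m \<alpha> = n}. G \<alpha>)"

definition M_gps_data :: "germ set \<Rightarrow> nat \<Rightarrow> ((nat \<Rightarrow> real) \<Rightarrow> 'k::zero) \<Rightarrow> (nat \<Rightarrow> germ) \<Rightarrow> bool" where
  "M_gps_data M k G m \<longleftrightarrow> gen_power_series k G \<and> natural_support k G \<and>
     (\<forall>i\<le>k. m i \<in> M \<and> gsmall (m i))"

definition power_series_ring :: "germ set \<Rightarrow> (germ \<Rightarrow> 'k::comm_ring_1) set" where
  "power_series_ring M = {gps_eval k G m | k G m. M_gps_data M k G m}"

definition laurent_series_ring :: "germ set \<Rightarrow> (germ \<Rightarrow> 'k::comm_ring_1) set" where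
  "laurent_series_ring M =
     {ser_mult (mono_ser 1 (monom k m r)) (gps_eval k G m) | k G m r. M_gps_data M k G m}"

end

theory Submission
  imports Defs
begin

lemma gpowr_add: "gpos m \<Longrightarrow> gpowr m a * gpowr m b = gpowr m (a+b)"
  by transfer (auto simp: germ_eq_def powr_add elim!: eventually_mono)

lemma gpowr_zero: "gpos m \<Longrightarrow> gpowr m 0 = 1"
  by transfer (auto simp: germ_eq_def elim!: eventually_mono)

lemma gpowr_one: "gpos m \<Longrightarrow> gpowr m 1 = m"
  by transfer (auto simp: germ_eq_def elim!: eventually_mono)

lemma gpos_one: "gpos 1"
  by transfer simp

lemma gpos_mult: "gpos a \<Longrightarrow> gpos b \<Longrightarrow> gpos (a*b)"
  by transfer (auto elim: eventually_elim2)

lemma gpos_gpowr: "gpos a \<Longrightarrow> gpos (gpowr a r)"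
  by transfer (auto elim: eventually_mono)

lemma gpos_prod: "(\<And>x. x \<in> S \<Longrightarrow> gpos (f x)) \<Longrightarrow> gpos (\<Prod>x\<in>S. f x)"
  by (induction S rule: infinite_finite_induct) (auto simp: gpos_one gpos_mult)

lemma gpowr_inv: "gpos m \<Longrightarrow> m * gpowr m (-1) = 1"
  using gpowr_add[of m 1 "-1"] gpowr_one[of m] gpowr_zero[of m] by simp

lemma gcancel: "gpos c \<Longrightarrow> c * x = c * y \<Longrightarrow> x = y"
  by (metis gpowr_inv mult.assoc mult.commute mult_1_left)

lemma gle_refl: "a \<preceq> a"
  by transfer (auto intro!: exI[of _ 1])

lemma gle_trans: "a \<preceq> b \<Longrightarrow> b \<preceq> c \<Longrightarrow> a \<preceq> c"
proof transfer
  fix a b c :: "real \<Rightarrow> real"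
  assume "\<exists>c1. \<forall>\<^sub>F x in at_top. \<bar>a x\<bar> \<le> c1 * \<bar>b x\<bar>" "\<exists>c2. \<forall>\<^sub>F x in at_top. \<bar>b x\<bar> \<le> c2 * \<bar>c x\<bar>"
  then obtain c1 c2 where 1: "\<forall>\<^sub>F x in at_top. \<bar>a x\<bar> \<le> c1 * \<bar>b x\<bar>" and 2: "\<forall>\<^sub>F x in at_top. \<bar>b x\<bar> \<le> c2 * \<bar>c x\<bar>" by blast
  have "\<forall>\<^sub>F x in at_top. \<bar>a x\<bar> \<le> (\<bar>c1\<bar> * \<bar>c2\<bar>) * \<bar>c x\<bar>"
    using 1 2
  proof eventually_elim
    case (elim x)
    have "\<bar>a x\<bar> \<le> \<bar>c1\<bar> * \<bar>b x\<bar>" using elim(1) by (meson abs_ge_self abs_ge_zero mult_right_mono order.trans)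
    also have "\<dots> \<le> \<bar>c1\<bar> * (\<bar>c2\<bar> * \<bar>c x\<bar>)"
      using elim(2) by (intro mult_left_mono) (auto intro: order.trans[OF _ mult_right_mono[OF abs_ge_self]])
    finally show ?case by (simp add: mult.assoc)
  qed
  then show "\<exists>c'. \<forall>\<^sub>F x in at_top. \<bar>a x\<bar> \<le> c' * \<bar>c x\<bar>" by blast
qed

lemma gle_mult: "a \<preceq> b \<Longrightarrow> a * c \<preceq> b * c"
proof transfer
  fix a b c :: "real \<Rightarrow> real"
  assume "\<exists>c1. \<forall>\<^sub>F x in at_top. \<bar>a x\<bar> \<le> c1 * \<bar>b x\<bar>"
  then obtain c1 where 1: "\<forall>\<^sub>F x in at_top. \<bar>a x\<bar> \<le> c1 * \<bar>b x\<bar>" by blast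
  have "\<forall>\<^sub>F x in at_top. \<bar>a x * c x\<bar> \<le> c1 * \<bar>b x * c x\<bar>"
    using 1 by eventually_elim (auto simp: abs_mult mult.assoc[symmetric] intro: mult_right_mono)
  then show "\<exists>c'. \<forall>\<^sub>F x in at_top. \<bar>a x * c x\<bar> \<le> c' * \<bar>b x * c x\<bar>" by blast
qed

lemma gle_mult2: "a \<preceq> b \<Longrightarrow> c \<preceq> d \<Longrightarrow> a * c \<preceq> b * d"
  by (metis gle_mult gle_trans mult.commute)

lemma gsmall_not_one: "gsmall m \<Longrightarrow> m \<noteq> 1"
proof
  assume "gsmall m" "m = 1"
  then have "gsmall 1" by simp
  then show False
    by transfer (simp add: tendsto_const_iff)
qed

lemma gsmall_le_one: "gsmall m \<Longrightarrow> m \<preceq> 1"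
proof transfer
  fix f :: "real \<Rightarrow> real"
  assume "(f \<longlongrightarrow> 0) at_top"
  then have "\<forall>\<^sub>F x in at_top. dist (f x) 0 < 1" using tendstoD by fastforce
  then have "\<forall>\<^sub>F x in at_top. \<bar>f x\<bar> \<le> 1 * \<bar>1\<bar>" by eventually_elim auto
  then show "\<exists>c. \<forall>\<^sub>F x in at_top. \<bar>f x\<bar> \<le> c * \<bar>1\<bar>" by blast
qed

lemma gsmall_powr_le_one: "gsmall m \<Longrightarrow> gpos m \<Longrightarrow> a \<ge> 0 \<Longrightarrow> gpowr m a \<preceq> 1"
proof transfer
  fix f :: "real \<Rightarrow> real" and a :: real
  assume f0: "(f \<longlongrightarrow> 0) at_top" and pf: "\<forall>\<^sub>F x in at_top. 0 < f x" and a: "a \<ge> 0"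
  have d: "\<forall>\<^sub>F x in at_top. dist (f x) 0 < 1" using f0 tendstoD by fastforce
  have "\<forall>\<^sub>F x in at_top. \<bar>f x powr a\<bar> \<le> 1 * \<bar>1\<bar>"
    using pf d by eventually_elim (use a in \<open>auto intro!: powr_le1 simp: dist_real_def\<close>)
  then show "\<exists>c. \<forall>\<^sub>F x in at_top. \<bar>f x powr a\<bar> \<le> c * \<bar>1\<bar>" by blast
qed

lemma ghardy_total: "gpos m \<Longrightarrow> gpos n \<Longrightarrow> ghardy_limit (m * gpowr n (-1)) \<Longrightarrow> m \<preceq> n \<or> n \<preceq> m"
proof transfer
  fix f g :: "real \<Rightarrow> real"
  assume pf: "\<forall>\<^sub>F x in at_top. 0 < f x" and pg: "\<forall>\<^sub>F x in at_top. 0 < g x"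
    and h: "((\<lambda>x. f x * g x powr - 1) \<longlongrightarrow> 0) at_top \<or> filterlim (\<lambda>x. f x * g x powr - 1) at_top at_top \<or>
       (\<exists>c>0. ((\<lambda>x. f x * g x powr - 1) \<longlongrightarrow> c) at_top)"
  have eq: "\<forall>\<^sub>F x in at_top. f x * g x powr - 1 = f x / g x"
    using pg by eventually_elim (simp add: powr_minus divide_inverse)
  show "(\<exists>c. \<forall>\<^sub>F x in at_top. \<bar>f x\<bar> \<le> c * \<bar>g x\<bar>) \<or> (\<exists>c. \<forall>\<^sub>F x in at_top. \<bar>g x\<bar> \<le> c * \<bar>f x\<bar>)"
  proof -
    { assume "\<exists>c. ((\<lambda>x. f x * g x powr - 1) \<longlongrightarrow> c) at_top"
      then obtain c where "((\<lambda>x. f x * g x powr - 1) \<longlongrightarrow> c) at_top" by blast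
      then have "\<forall>\<^sub>F x in at_top. dist (f x * g x powr - 1) c < 1" using tendstoD by fastforce
      then have "\<forall>\<^sub>F x in at_top. \<bar>f x\<bar> \<le> (\<bar>c\<bar>+1) * \<bar>g x\<bar>"
        using eq pf pg
      proof eventually_elim
        case (elim x)
        then have "f x / g x \<le> \<bar>c\<bar> + 1" by (auto simp: dist_real_def)
        then show ?case using elim by (simp add: field_simps)
      qed
      then have ?thesis by blast }
    moreover
    { assume "filterlim (\<lambda>x. f x * g x powr - 1) at_top at_top"
      then have "\<forall>\<^sub>F x in at_top. f x * g x powr - 1 \<ge> 1" by (simp add: filterlim_at_top)
      then have "\<forall>\<^sub>F x in at_top. \<bar>g x\<bar> \<le> 1 * \<bar>f x\<bar>"
        using eq pf pg
      proof eventually_elim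
        case (elim x)
        then show ?case by (simp add: field_simps)
      qed
      then have ?thesis by blast }
    ultimately show ?thesis using h by blast
  qed
qed

lemma ghardy_small: "gpos m \<Longrightarrow> ghardy_limit m \<Longrightarrow> m \<preceq> 1 \<Longrightarrow> gsmall m \<or> (m \<preceq> 1 \<and> 1 \<preceq> m)"
proof transfer
  fix f :: "real \<Rightarrow> real"
  assume pf: "\<forall>\<^sub>F x in at_top. 0 < f x" and
    h: "(f \<longlongrightarrow> 0) at_top \<or> filterlim f at_top at_top \<or> (\<exists>c>0. (f \<longlongrightarrow> c) at_top)"
    and le: "\<exists>c. \<forall>\<^sub>F x in at_top. \<bar>f x\<bar> \<le> c * \<bar>1\<bar>"
  from le obtain C where C: "\<forall>\<^sub>F x in at_top. \<bar>f x\<bar> \<le> C * \<bar>1\<bar>" by blast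
  have notinf: "\<not> filterlim f at_top at_top"
  proof
    assume "filterlim f at_top at_top"
    then have "\<forall>\<^sub>F x in at_top. f x \<ge> C + 1" by (simp add: filterlim_at_top)
    have "\<forall>\<^sub>F x in at_top. f x \<noteq> f x" using C \<open>\<forall>\<^sub>F x in at_top. f x \<ge> C + 1\<close>
      by eventually_elim auto
    then show False by simp
  qed
  { assume "\<exists>c>0. (f \<longlongrightarrow> c) at_top"
    then obtain c where c: "c > 0" "(f \<longlongrightarrow> c) at_top" by blast
    then have "\<forall>\<^sub>F x in at_top. dist (f x) c < c/2" using tendstoD[of f c at_top "c/2"] by auto
    then have "\<forall>\<^sub>F x in at_top. \<bar>1\<bar> \<le> (2/c) * \<bar>f x\<bar>"
    proof eventually_elim
      case (elim x)
      then have "f x > c/2" using abs_ge_minus_self[of "f x - c"] by (simp add: dist_real_def)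
      then show ?case using c(1) by (auto simp: field_simps)
    qed
    then have "\<exists>c. \<forall>\<^sub>F x in at_top. \<bar>1::real\<bar> \<le> c * \<bar>f x\<bar>" by blast }
  then show "(f \<longlongrightarrow> 0) at_top \<or> (\<exists>c. \<forall>\<^sub>F x in at_top. \<bar>f x\<bar> \<le> c * \<bar>1\<bar>) \<and> (\<exists>c. \<forall>\<^sub>F x in at_top. \<bar>1\<bar> \<le> c * \<bar>f x\<bar>)"
    using h notinf le by blast
qed

locale scale =
  fixes M :: "germ set"
  assumes sub: "mult_R_subspace M" and asc: "asymptotic_scale M"
begin

lemma M_one: "1 \<in> M" using sub by (simp add: mult_R_subspace_def)
lemma M_mult: "m \<in> M \<Longrightarrow> n \<in> M \<Longrightarrow> m * n \<in> M" using sub by (simp add: mult_R_subspace_def)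
lemma M_gpowr: "m \<in> M \<Longrightarrow> gpowr m r \<in> M" using sub by (simp add: mult_R_subspace_def)
lemma M_gpos: "m \<in> M \<Longrightarrow> gpos m" using sub by (simp add: mult_R_subspace_def)
lemma M_hardy: "m \<in> M \<Longrightarrow> ghardy_limit m" using sub by (simp add: mult_R_subspace_def)

lemma M_prod: "(\<And>x. x \<in> S \<Longrightarrow> f x \<in> M) \<Longrightarrow> (\<Prod>x\<in>S. f x) \<in> M"
  by (induction S rule: infinite_finite_induct) (auto simp: M_one M_mult)

lemma M_total: "m \<in> M \<Longrightarrow> n \<in> M \<Longrightarrow> m \<preceq> n \<or> n \<preceq> m"
  by (intro ghardy_total M_gpos M_hardy M_mult M_gpowr)

lemma M_antisym: assumes "m \<in> M" "n \<in> M" "m \<preceq> n" "n \<preceq> m" shows "m = n"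
proof -
  let ?i = "gpowr n (-1)"
  have h: "m * ?i \<in> M" using assms by (simp add: M_mult M_gpowr)
  have ni: "n * ?i = 1" using gpowr_inv M_gpos assms by blast
  have "m * ?i \<preceq> 1" using gle_mult[OF assms(3), of ?i] ni by simp
  moreover have "1 \<preceq> m * ?i" using gle_mult[OF assms(4), of ?i] ni by simp
  ultimately have "m * ?i = 1" using asc h by (auto simp: asymptotic_scale_def gasymp_def)
  then have "m * ?i * n = n" by simp
  then show ?thesis using ni by (metis mult.assoc mult.commute mult_1_right)
qed

lemma M_small_iff: assumes "m \<in> M" shows "gsmall m \<longleftrightarrow> m \<preceq> 1 \<and> m \<noteq> 1"
proof
  assume "gsmall m" then show "m \<preceq> 1 \<and> m \<noteq> 1" using gsmall_le_one gsmall_not_one by blast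
next
  assume a: "m \<preceq> 1 \<and> m \<noteq> 1"
  then have "gsmall m \<or> (m \<preceq> 1 \<and> 1 \<preceq> m)" using ghardy_small M_gpos M_hardy assms by blast
  then show "gsmall m" using a M_antisym[OF assms M_one] by blast
qed

end

definition mon :: "germ set \<Rightarrow> (germ \<Rightarrow> real) \<Rightarrow> germ" where
  "mon Gs e = (\<Prod>g\<in>Gs. gpowr g (e g))"

lemma mon_add: "(\<And>g. g \<in> Gs \<Longrightarrow> gpos g) \<Longrightarrow> mon Gs (\<lambda>g. e g + f g) = mon Gs e * mon Gs f"
  unfolding mon_def prod.distrib[symmetric] by (intro prod.cong) (auto simp: gpowr_add)

lemma mon_zero: "(\<And>g. g \<in> Gs \<Longrightarrow> gpos g) \<Longrightarrow> mon Gs (\<lambda>_. 0) = 1"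
  unfolding mon_def by (simp add: gpowr_zero)

lemma mon_inv: "(\<And>g. g \<in> Gs \<Longrightarrow> gpos g) \<Longrightarrow> mon Gs e * mon Gs (\<lambda>g. - e g) = 1"
  using mon_add[of Gs e "\<lambda>g. - e g"] mon_zero[of Gs] by simp

lemma mon_delta: assumes "finite Gs" "g \<in> Gs" "\<And>g. g \<in> Gs \<Longrightarrow> gpos g"
  shows "mon Gs (\<lambda>h. if h = g then 1 else 0) = g"
proof -
  have "mon Gs (\<lambda>h. if h = g then 1 else 0) = (\<Prod>h\<in>Gs. if h = g then g else 1)"
    unfolding mon_def by (intro prod.cong) (auto simp: gpowr_one gpowr_zero assms)
  also have "\<dots> = g" using assms by (simp add: prod.delta)
  finally show ?thesis .
qed

lemma mon_extend: assumes "finite Gs'" "Gs \<subseteq> Gs'" "\<And>g. g \<in> Gs' - Gs \<Longrightarrow> e g = 0"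
  "\<And>g. g \<in> Gs' \<Longrightarrow> gpos g"
  shows "mon Gs' e = mon Gs e"
  unfolding mon_def using assms by (intro prod.mono_neutral_right) (auto simp: gpowr_zero)

lemma mon_gpos: "(\<And>g. g \<in> Gs \<Longrightarrow> gpos g) \<Longrightarrow> gpos (mon Gs e)"
  unfolding mon_def by (intro gpos_prod gpos_gpowr) auto

lemma prod_le_one: "(\<And>x. x \<in> S \<Longrightarrow> f x \<preceq> 1) \<Longrightarrow> (\<Prod>x\<in>S. f x) \<preceq> 1"
proof (induction S rule: infinite_finite_induct)
  case (insert x F)
  then show ?case using gle_mult2[of "f x" 1 "prod f F" 1] by simp
qed (auto simp: gle_refl)

lemma mon_le_one: "(\<And>g. g \<in> Gs \<Longrightarrow> gpos g \<and> gsmall g \<and> e g \<ge> 0) \<Longrightarrow> mon Gs e \<preceq> 1"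
  unfolding mon_def by (intro prod_le_one gsmall_powr_le_one) auto

lemma mon_le: assumes "\<And>g. g \<in> Gs \<Longrightarrow> gpos g \<and> gsmall g \<and> \<phi> g \<le> e g"
  shows "mon Gs e \<preceq> mon Gs \<phi>"
proof -
  have "mon Gs e = mon Gs \<phi> * mon Gs (\<lambda>g. e g - \<phi> g)"
    using mon_add[of Gs \<phi> "\<lambda>g. e g - \<phi> g"] assms by simp
  moreover have "mon Gs (\<lambda>g. e g - \<phi> g) \<preceq> 1" using assms by (intro mon_le_one) auto
  ultimately show ?thesis using gle_mult[of _ 1 "mon Gs \<phi>"] by (metis mult.commute mult_1_left)
qed

context scale begin
lemma mon_in_M: "Gs \<subseteq> M \<Longrightarrow> mon Gs e \<in> M"
  unfolding mon_def by (intro M_prod M_gpowr) auto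
end

definition natset :: "real set \<Rightarrow> bool" where
  "natset A \<longleftrightarrow> (\<forall>x\<in>A. 0 \<le> x) \<and> (\<forall>a. finite (A \<inter> {..<a}))"

lemma natset_subset: "natset A \<Longrightarrow> B \<subseteq> A \<Longrightarrow> natset B"
  unfolding natset_def by (meson Int_mono finite_subset order_refl subsetD)

lemma natset_union: "natset A \<Longrightarrow> natset B \<Longrightarrow> natset (A \<union> B)"
  unfolding natset_def by (auto simp: Int_Un_distrib2)

lemma natset_finite: "finite A \<Longrightarrow> \<forall>x\<in>A. 0 \<le> x \<Longrightarrow> natset A"
  unfolding natset_def by auto

lemma natset_plus: assumes "natset A" "natset B" shows "natset {x + y | x y. x \<in> A \<and> y \<in> B}"
proof -
  have "{x + y | x y. x \<in> A \<and> y \<in> B} \<inter> {..<a} \<subseteq> (\<lambda>(x,y). x + y) ` ((A \<inter> {..<a}) \<times> (B \<inter> {..<a}))" for a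
  proof
    fix z assume "z \<in> {x + y | x y. x \<in> A \<and> y \<in> B} \<inter> {..<a}"
    then obtain x y where "z = x + y" "x \<in> A" "y \<in> B" "z < a" by auto
    moreover have "x \<ge> 0" "y \<ge> 0" using assms calculation unfolding natset_def by auto
    ultimately show "z \<in> (\<lambda>(x,y). x + y) ` ((A \<inter> {..<a}) \<times> (B \<inter> {..<a}))"
      by (auto intro!: image_eqI[of _ _ "(x,y)"])
  qed
  note sub = this
  show ?thesis unfolding natset_def
  proof (intro conjI ballI allI)
    fix z assume "z \<in> {x + y | x y. x \<in> A \<and> y \<in> B}"
    then show "0 \<le> z" using assms unfolding natset_def by force
  next
    fix a :: real
    have "finite ((A \<inter> {..<a}) \<times> (B \<inter> {..<a}))" using assms unfolding natset_def by auto
    then show "finite ({x + y | x y. x \<in> A \<and> y \<in> B} \<inter> {..<a})"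
      using sub[of a] by (meson finite_imageI finite_subset)
  qed
qed

lemma natset_shift: assumes "natset A" "c \<ge> 0" shows "natset ((+) c ` A)"
proof -
  have "natset {c}" using assms(2) by (intro natset_finite) auto
  from natset_plus[OF this assms(1)] show ?thesis by (rule natset_subset) auto
qed

lemma natset_sub: assumes "natset A" shows "natset {x - c | x. x \<in> A \<and> c \<le> x}"
proof -
  have "{x - c | x. x \<in> A \<and> c \<le> x} \<inter> {..<a} \<subseteq> (\<lambda>x. x - c) ` (A \<inter> {..<a + c})" for a
    by auto
  note sub = this
  show ?thesis unfolding natset_def
  proof (intro conjI ballI allI)
    fix z assume "z \<in> {x - c | x. x \<in> A \<and> c \<le> x}" then show "0 \<le> z" by auto
  next
    fix a
    have "finite (A \<inter> {..<a + c})" using assms unfolding natset_def by auto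
    then show "finite ({x - c | x. x \<in> A \<and> c \<le> x} \<inter> {..<a})" using sub[of a]
      by (meson finite_imageI finite_subset)
  qed
qed

lemma natset_wo: assumes "natset A" shows "well_ordered_real A"
  unfolding well_ordered_real_def
proof (intro allI impI)
  fix S assume S: "S \<subseteq> A" "S \<noteq> {}"
  then obtain x where x: "x \<in> S" by blast
  let ?T = "S \<inter> {..<x+1}"
  have "finite ?T" using assms S unfolding natset_def by (meson finite_subset inf_mono order_refl)
  moreover have "x \<in> ?T" using x by auto
  ultimately have m: "Min ?T \<in> ?T" by (intro Min_in) auto
  have "\<forall>y\<in>S. Min ?T \<le> y"
  proof
    fix y assume "y \<in> S"
    show "Min ?T \<le> y"
    proof (cases "y < x + 1")
      case True then show ?thesis using \<open>y \<in> S\<close> \<open>finite ?T\<close> by (intro Min_le) auto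
    next
      case False
      have "Min ?T \<le> x" using \<open>finite ?T\<close> \<open>x \<in> ?T\<close> by (intro Min_le) auto
      then show ?thesis using False by linarith
    qed
  qed
  then show "\<exists>x\<in>S. \<forall>y\<in>S. x \<le> y" using m by blast
qed

lemma sum_list_length_ge: "(\<And>x. x \<in> set ys \<Longrightarrow> x \<ge> \<epsilon>) \<Longrightarrow> real (length ys) * \<epsilon> \<le> sum_list ys"
proof (induction ys)
  case (Cons a ys)
  then have "\<epsilon> \<le> a" "real (length ys) * \<epsilon> \<le> sum_list ys" by auto
  then show ?case by (simp add: algebra_simps)
qed simp

lemma natset_closure: assumes "natset A"
  shows "\<exists>N. A \<subseteq> N \<and> 0 \<in> N \<and> (\<forall>x\<in>N. \<forall>y\<in>N. x + y \<in> N) \<and> natset N"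
proof -
  define N where "N = {sum_list xs | xs. set xs \<subseteq> A}"
  have nn: "\<forall>x\<in>A. 0 \<le> x" using assms by (simp add: natset_def)
  have "A \<subseteq> N" unfolding N_def by (auto intro!: exI[of _ "[x]" for x])
  moreover have "0 \<in> N" unfolding N_def by (auto intro!: exI[of _ "[]"])
  moreover have "\<forall>x\<in>N. \<forall>y\<in>N. x + y \<in> N"
  proof (intro ballI)
    fix x y assume "x \<in> N" "y \<in> N"
    then obtain xs ys where "set xs \<subseteq> A" "x = sum_list xs" "set ys \<subseteq> A" "y = sum_list ys" unfolding N_def by auto
    then show "x + y \<in> N" unfolding N_def by (auto intro!: exI[of _ "xs @ ys"])
  qed
  moreover have "natset N"
    unfolding natset_def
  proof (intro conjI ballI allI)
    fix x assume "x \<in> N" then show "0 \<le> x" using nn unfolding N_def by (auto intro!: sum_list_nonneg)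
  next
    fix a :: real
    define B where "B = A \<inter> {0<..<a}"
    have fB: "finite B" using assms unfolding natset_def B_def
      by (metis (no_types, lifting) finite_Int greaterThanLessThan_eq inf_assoc inf_commute)
    define \<epsilon> where "\<epsilon> = (if B = {} then 1 else Min B)"
    have ep: "\<epsilon> > 0" using fB by (auto simp: \<epsilon>_def B_def)
    have epB: "\<forall>x\<in>B. \<epsilon> \<le> x" using fB by (auto simp: \<epsilon>_def)
    define L where "L = nat \<lceil>a / \<epsilon>\<rceil>"
    have "N \<inter> {..<a} \<subseteq> sum_list ` {ys. set ys \<subseteq> B \<and> length ys \<le> L}"
    proof
      fix z assume "z \<in> N \<inter> {..<a}"
      then obtain xs where xs: "set xs \<subseteq> A" "z = sum_list xs" "z < a" unfolding N_def by auto
      define ys where "ys = filter (\<lambda>x. x > 0) xs"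
      have sx: "sum_list ys = sum_list xs" unfolding ys_def using xs(1) nn
      proof (induction xs)
        case (Cons x xs)
        then have "x \<ge> 0" "sum_list (filter (\<lambda>x. x > 0) xs) = sum_list xs" by auto
        then show ?case by auto
      qed simp
      have le: "x \<le> sum_list xs" if "x \<in> set xs" for x using that xs(1) nn
      proof (induction xs)
        case (Cons y xs)
        then have "0 \<le> sum_list xs" by (auto intro!: sum_list_nonneg)
        then show ?case using Cons by auto
      qed simp
      have yB: "set ys \<subseteq> B" unfolding ys_def B_def using xs le by fastforce
      have "real (length ys) * \<epsilon> \<le> sum_list ys" using yB epB by (intro sum_list_length_ge) auto
      then have "real (length ys) * \<epsilon> \<le> a" using sx xs by simp
      then have "real (length ys) \<le> a / \<epsilon>" using ep by (simp add: field_simps)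
      then have "length ys \<le> L" unfolding L_def by linarith
      then show "z \<in> sum_list ` {ys. set ys \<subseteq> B \<and> length ys \<le> L}" using yB sx xs
        by (intro image_eqI[of _ _ ys]) auto
    qed
    then show "finite (N \<inter> {..<a})" using finite_lists_length_le[OF fB] by (meson finite_imageI finite_subset)
  qed
  ultimately show ?thesis by blast
qed

lemma dickson:
  fixes Gs :: "'a set" and D :: "('a \<Rightarrow> real) set"
  assumes "finite Gs"
  shows "(\<forall>g\<in>Gs. \<forall>a. finite ((\<lambda>e. e g) ` D \<inter> {..<a})) \<Longrightarrow>
    \<exists>\<Phi>\<subseteq>D. finite \<Phi> \<and> (\<forall>e\<in>D. \<exists>\<phi>\<in>\<Phi>. \<forall>g\<in>Gs. \<phi> g \<le> e g)"
  using assms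
proof (induction Gs arbitrary: D rule: finite_induct)
  case empty
  show ?case
  proof (cases "D = {}")
    case True then show ?thesis by auto
  next
    case False
    then obtain x where "x \<in> D" by blast
    then show ?thesis by (intro exI[of _ "{x}"]) auto
  qed
next
  case (insert g Gs)
  note IH = insert.IH
  obtain \<Phi>0 where \<Phi>0: "\<Phi>0 \<subseteq> D" "finite \<Phi>0" "\<forall>e\<in>D. \<exists>\<phi>\<in>\<Phi>0. \<forall>h\<in>Gs. \<phi> h \<le> e h"
    using IH[of D] insert.prems by auto
  define V where "V = Max ((\<lambda>\<phi>. \<phi> g) ` \<Phi>0)"
  define W where "W = (\<lambda>e. e g) ` D \<inter> {..<V}"
  have fW: "finite W" using insert.prems unfolding W_def by auto
  have "\<forall>w. \<exists>\<Psi>. \<Psi> \<subseteq> {e\<in>D. e g = w} \<and> finite \<Psi> \<and> (\<forall>e\<in>{e\<in>D. e g = w}. \<exists>\<phi>\<in>\<Psi>. \<forall>h\<in>Gs. \<phi> h \<le> e h)"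
  proof
    fix w
    have "\<forall>h\<in>Gs. \<forall>a. finite ((\<lambda>e. e h) ` {e\<in>D. e g = w} \<inter> {..<a})"
    proof (intro ballI allI)
      fix h a assume "h \<in> Gs"
      have "finite ((\<lambda>e. e h) ` D \<inter> {..<a})" using insert.prems \<open>h \<in> Gs\<close> by auto
      then show "finite ((\<lambda>e. e h) ` {e\<in>D. e g = w} \<inter> {..<a})" by (rule finite_subset[rotated]) auto
    qed
    then show "\<exists>\<Psi>. \<Psi> \<subseteq> {e\<in>D. e g = w} \<and> finite \<Psi> \<and> (\<forall>e\<in>{e\<in>D. e g = w}. \<exists>\<phi>\<in>\<Psi>. \<forall>h\<in>Gs. \<phi> h \<le> e h)"
      by (rule IH)
  qed
  then have "\<exists>\<Psi>. \<forall>w. \<Psi> w \<subseteq> {e\<in>D. e g = w} \<and> finite (\<Psi> w) \<and> (\<forall>e\<in>{e\<in>D. e g = w}. \<exists>\<phi>\<in>\<Psi> w. \<forall>h\<in>Gs. \<phi> h \<le> e h)"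
    by (rule choice)
  then obtain \<Psi> where \<Psi>: "\<And>w. \<Psi> w \<subseteq> {e\<in>D. e g = w} \<and> finite (\<Psi> w) \<and> (\<forall>e\<in>{e\<in>D. e g = w}. \<exists>\<phi>\<in>\<Psi> w. \<forall>h\<in>Gs. \<phi> h \<le> e h)"
    by blast
  define \<Phi> where "\<Phi> = \<Phi>0 \<union> (\<Union>w\<in>W. \<Psi> w)"
  have "\<Phi> \<subseteq> D" using \<Phi>0 \<Psi> unfolding \<Phi>_def by blast
  moreover have "finite \<Phi>" using \<Phi>0 \<Psi> fW unfolding \<Phi>_def by blast
  moreover have "\<forall>e\<in>D. \<exists>\<phi>\<in>\<Phi>. \<forall>h\<in>insert g Gs. \<phi> h \<le> e h"
  proof
    fix e assume e: "e \<in> D"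
    then obtain \<phi> where \<phi>: "\<phi> \<in> \<Phi>0" "\<forall>h\<in>Gs. \<phi> h \<le> e h" using \<Phi>0 by blast
    show "\<exists>\<phi>\<in>\<Phi>. \<forall>h\<in>insert g Gs. \<phi> h \<le> e h"
    proof (cases "\<phi> g \<le> e g")
      case True then show ?thesis using \<phi> unfolding \<Phi>_def by auto
    next
      case False
      have "\<phi> g \<le> V" unfolding V_def using \<phi> \<Phi>0 by auto
      then have "e g \<in> W" using False e unfolding W_def by auto
      moreover obtain \<psi> where "\<psi> \<in> \<Psi> (e g)" "\<forall>h\<in>Gs. \<psi> h \<le> e h" using \<Psi>[of "e g"] e by blast
      moreover have "\<psi> g = e g" using \<Psi>[of "e g"] calculation by blast
      ultimately have "\<psi> \<in> \<Phi>" "\<forall>h\<in>insert g Gs. \<psi> h \<le> e h" unfolding \<Phi>_def by auto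
      then show ?thesis by blast
    qed
  qed
  ultimately show ?case by blast
qed

lemma ser_mult_mono:
  assumes c: "gpos c"
  shows "ser_mult (mono_ser a c) F u = a * F (gpowr c (-1) * u)"
proof -
  let ?v = "gpowr c (-1) * u"
  have cv: "c * ?v = u" using gpowr_inv[OF c] by (simp add: mult.assoc[symmetric])
  have eq: "q = ?v" if "c * q = u" for q
    using that gpowr_inv[OF c] by (metis mult.assoc mult.commute mult_1_left)
  have S: "{(p, q). mono_ser a c p \<noteq> 0 \<and> F q \<noteq> 0 \<and> p * q = u} =
           (if a \<noteq> 0 \<and> F ?v \<noteq> 0 then {(c, ?v)} else {})"
  proof (cases "a \<noteq> 0 \<and> F ?v \<noteq> 0")
    case True
    show ?thesis
    proof (rule set_eqI, clarify)
      fix p q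
      show "((p, q) \<in> {(p, q). mono_ser a c p \<noteq> 0 \<and> F q \<noteq> 0 \<and> p * q = u}) = ((p, q) \<in> (if a \<noteq> 0 \<and> F ?v \<noteq> 0 then {(c, ?v)} else {}))"
        using True cv eq[of q] by (auto simp: mono_ser_def)
    qed
  next
    case False
    show ?thesis
    proof (rule set_eqI, clarify)
      fix p q
      show "((p, q) \<in> {(p, q). mono_ser a c p \<noteq> 0 \<and> F q \<noteq> 0 \<and> p * q = u}) = ((p, q) \<in> (if a \<noteq> 0 \<and> F ?v \<noteq> 0 then {(c, ?v)} else {}))"
        using False eq[of q] by (auto simp: mono_ser_def)
    qed
  qed
  show ?thesis unfolding ser_mult_def S by (auto simp: mono_ser_def)
qed

lemma prod_gpowr: "gpos g \<Longrightarrow> (\<Prod>i\<in>I. gpowr g (f i)) = gpowr g (\<Sum>i\<in>I. f i)"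
  by (induction I rule: infinite_finite_induct) (auto simp: gpowr_zero gpowr_add)

definition sdesc :: "germ set \<Rightarrow> germ set \<Rightarrow> (germ \<Rightarrow> real) set \<Rightarrow> bool" where
  "sdesc M Gs \<Gamma> \<longleftrightarrow> finite Gs \<and> Gs \<noteq> {} \<and> Gs \<subseteq> M \<and> (\<forall>g\<in>Gs. gsmall g) \<and>
     (\<forall>g\<in>Gs. natset ((\<lambda>e. e g) ` \<Gamma>)) \<and> (\<forall>e\<in>\<Gamma>. \<forall>g. g \<notin> Gs \<longrightarrow> e g = 0)"

context scale begin

lemma crit_core:
  fixes H :: "germ \<Rightarrow> 'k::comm_ring_1"
  assumes sd: "sdesc M Gs \<Gamma>" and c: "gpos c" and supp: "supp H \<subseteq> {c * mon Gs e | e. e \<in> \<Gamma>}"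
  shows "\<exists>k G m. M_gps_data M k G m \<and> gps_eval k G m = (\<lambda>w. H (c * w)) \<and>
           (\<forall>r. \<exists>r'. monom k m r' = mon Gs r)"
proof -
  have fin: "finite Gs" and ne: "Gs \<noteq> {}" and GM: "Gs \<subseteq> M" and sm: "\<forall>g\<in>Gs. gsmall g"
    and nat: "\<forall>g\<in>Gs. natset ((\<lambda>e. e g) ` \<Gamma>)"
    using sd unfolding sdesc_def by auto
  have gp: "\<And>g. g \<in> Gs \<Longrightarrow> gpos g" using GM M_gpos by auto
  obtain m where bij0: "bij_betw m {0..<card Gs} Gs" using ex_bij_betw_nat_finite[OF fin] by blast
  define k where "k = card Gs - 1"
  have "card Gs > 0" using fin ne by (simp add: card_gt_0_iff)
  then have kk: "{..k} = {0..<card Gs}" unfolding k_def by auto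
  have bij: "bij_betw m {..k} Gs" using bij0 kk by simp
  have mk: "m i \<in> Gs" if "i \<le> k" for i using bij that by (auto simp: bij_betw_def)
  define vec where "vec e = (\<lambda>i. if i \<le> k then e (m i) else 0)" for e :: "germ \<Rightarrow> real"
  have monvec: "monom k m (vec e) = mon Gs e" for e
  proof -
    have "monom k m (vec e) = (\<Prod>i\<in>{..k}. gpowr (m i) (e (m i)))"
      unfolding monom_def vec_def by (intro prod.cong) auto
    also have "\<dots> = mon Gs e" unfolding mon_def by (rule prod.reindex_bij_betw[OF bij])
    finally show ?thesis .
  qed
  define ch where "ch u = (SOME e. e \<in> \<Gamma> \<and> u = c * mon Gs e)" for u
  have ch: "ch u \<in> \<Gamma> \<and> u = c * mon Gs (ch u)" if "H u \<noteq> 0" for u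
  proof -
    have "\<exists>e. e \<in> \<Gamma> \<and> u = c * mon Gs e" using supp that by (auto simp: supp_def)
    then show ?thesis unfolding ch_def by (rule someI_ex)
  qed
  have inj: "u = u'" if "H u \<noteq> 0" "H u' \<noteq> 0" "vec (ch u) = vec (ch u')" for u u'
    using ch[OF that(1)] ch[OF that(2)] that(3) monvec by metis
  define G where "G \<alpha> = (if \<exists>u. H u \<noteq> 0 \<and> \<alpha> = vec (ch u) then H (THE u. H u \<noteq> 0 \<and> \<alpha> = vec (ch u)) else 0)"
    for \<alpha>
  have Gv: "G (vec (ch u)) = H u" if "H u \<noteq> 0" for u
  proof -
    have "(THE u'. H u' \<noteq> 0 \<and> vec (ch u) = vec (ch u')) = u"
      using inj that by (intro the_equality) auto
    then show ?thesis unfolding G_def using that by auto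
  qed
  have Gsupp: "\<exists>u. H u \<noteq> 0 \<and> \<alpha> = vec (ch u)" if "G \<alpha> \<noteq> 0" for \<alpha>
    using that unfolding G_def by (auto split: if_splits)
  have coord: "\<alpha> i \<in> (\<lambda>e. e (m i)) ` \<Gamma>" if "G \<alpha> \<noteq> 0" "i \<le> k" for \<alpha> i
    using Gsupp[OF that(1)] ch that(2) unfolding vec_def by auto
  have natc: "natset ((\<lambda>e. e (m i)) ` \<Gamma>)" if "i \<le> k" for i using nat mk that by auto
  have g1: "(\<forall>i\<le>k. 0 \<le> \<alpha> i) \<and> (\<forall>i>k. \<alpha> i = 0)" if "G \<alpha> \<noteq> 0" for \<alpha>
  proof
    show "\<forall>i\<le>k. 0 \<le> \<alpha> i" using coord[OF that] natc unfolding natset_def by blast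
    show "\<forall>i>k. \<alpha> i = 0" using Gsupp[OF that] unfolding vec_def by auto
  qed
  have g2: "\<forall>i\<le>k. well_ordered_real ((\<lambda>e. e (m i)) ` \<Gamma>)" using natc natset_wo by blast
  have gps: "gen_power_series k G"
    unfolding gen_power_series_def
  proof (intro conjI)
    show "\<forall>\<alpha>. G \<alpha> \<noteq> 0 \<longrightarrow> (\<forall>i\<le>k. 0 \<le> \<alpha> i) \<and> (\<forall>i>k. \<alpha> i = 0)" using g1 by blast
    show "\<exists>W. (\<forall>i\<le>k. well_ordered_real (W i)) \<and> (\<forall>\<alpha>. G \<alpha> \<noteq> 0 \<longrightarrow> (\<forall>i\<le>k. \<alpha> i \<in> W i))"
      using g2 coord by (intro exI[of _ "\<lambda>i. (\<lambda>e. e (m i)) ` \<Gamma>"]) blast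
  qed
  have ns: "natural_support k G"
    unfolding natural_support_def
  proof (intro allI impI)
    fix a :: real and i assume "a > 0" "i \<le> k"
    have "finite ((\<lambda>e. e (m i)) ` \<Gamma> \<inter> {..<a})" using natc[OF \<open>i \<le> k\<close>] unfolding natset_def by blast
    moreover have "{\<alpha> i | \<alpha>. G \<alpha> \<noteq> 0} \<inter> {0..<a} \<subseteq> (\<lambda>e. e (m i)) ` \<Gamma> \<inter> {..<a}"
      using coord \<open>i \<le> k\<close> by auto
    ultimately show "finite ({\<alpha> i | \<alpha>. G \<alpha> \<noteq> 0} \<inter> {0..<a})" by (rule finite_subset[rotated])
  qed
  have data: "M_gps_data M k G m"
    unfolding M_gps_data_def using gps ns mk GM sm by auto
  have ev: "gps_eval k G m w = H (c * w)" for w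
  proof -
    have "{\<alpha>. G \<alpha> \<noteq> 0 \<and> monom k m \<alpha> = w} = (if H (c * w) \<noteq> 0 then {vec (ch (c * w))} else {})"
    proof (cases "H (c * w) \<noteq> 0")
      case True
      have "monom k m (vec (ch (c * w))) = w"
        using ch[OF True] monvec gcancel[OF c] by metis
      moreover have "\<alpha> = vec (ch (c * w))" if a1: "G \<alpha> \<noteq> 0" and a2: "monom k m \<alpha> = w" for \<alpha>
      proof -
        obtain u where u: "H u \<noteq> 0" "\<alpha> = vec (ch u)" using Gsupp[OF a1] by blast
        have "u = c * w" using ch[OF u(1)] a2 u(2) monvec by metis
        then show ?thesis using u by simp
      qed
      ultimately show ?thesis using True Gv[OF True] by auto
    next
      case False
      have "False" if a1: "G \<alpha> \<noteq> 0" and a2: "monom k m \<alpha> = w" for \<alpha>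
      proof -
        obtain u where u: "H u \<noteq> 0" "\<alpha> = vec (ch u)" using Gsupp[OF a1] by blast
        have "u = c * w" using ch[OF u(1)] a2 u(2) monvec by metis
        then show False using u False by simp
      qed
      then show ?thesis using False by auto
    qed
    then show ?thesis unfolding gps_eval_def by (auto simp: Gv)
  qed
  have "monom k m (vec r) = mon Gs r" for r by (rule monvec)
  then show ?thesis using data ev by blast
qed

lemma crit_L:
  fixes H :: "germ \<Rightarrow> 'k::comm_ring_1"
  assumes sd: "sdesc M Gs \<Gamma>" and supp: "supp H \<subseteq> {mon Gs r * mon Gs e | e. e \<in> \<Gamma>}"
  shows "H \<in> laurent_series_ring M"
proof -
  have gp: "\<And>g. g \<in> Gs \<Longrightarrow> gpos g" using sd M_gpos unfolding sdesc_def by auto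
  have c: "gpos (mon Gs r)" using mon_gpos gp by blast
  obtain k G m where d: "M_gps_data M k G m" "gps_eval k G m = (\<lambda>w. H (mon Gs r * w))"
    "\<forall>r. \<exists>r'. monom k m r' = mon Gs r"
    using crit_core[OF sd c supp] by blast
  obtain r' where r': "monom k m r' = mon Gs r" using d(3) by blast
  have "H = ser_mult (mono_ser 1 (monom k m r')) (gps_eval k G m)"
  proof
    fix u
    show "H u = ser_mult (mono_ser 1 (monom k m r')) (gps_eval k G m) u"
      unfolding r' ser_mult_mono[OF c] d(2)
      using gpowr_inv[OF c] by (simp add: mult.assoc[symmetric])
  qed
  then show ?thesis unfolding laurent_series_ring_def using d(1) by blast
qed

lemma crit_P:
  fixes H :: "germ \<Rightarrow> 'k::comm_ring_1"
  assumes sd: "sdesc M Gs \<Gamma>" and supp: "supp H \<subseteq> mon Gs ` \<Gamma>"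
  shows "H \<in> power_series_ring M"
proof -
  have supp': "supp H \<subseteq> {1 * mon Gs e | e. e \<in> \<Gamma>}" using supp by auto
  obtain k G m where d: "M_gps_data M k G m" "gps_eval k G m = (\<lambda>w. H (1 * w))"
    using crit_core[OF sd gpos_one supp'] by blast
  then have "H = gps_eval k G m" by simp
  then show ?thesis unfolding power_series_ring_def using d(1) by blast
qed

end

lemma natset_coord_sum:
  assumes "\<And>i. i \<in> I \<Longrightarrow> natset ((\<lambda>\<alpha>. \<alpha> i) ` D)" "finite I"
  shows "natset ((\<lambda>\<alpha>. \<Sum>i\<in>I. \<alpha> i) ` D)"
  using assms(2,1)
proof (induction I rule: finite_induct)
  case empty
  have "natset {0}" by (intro natset_finite) auto
  then show ?case by (rule natset_subset) auto
next
  case (insert j I)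
  have "natset {x + y | x y. x \<in> (\<lambda>\<alpha>. \<alpha> j) ` D \<and> y \<in> (\<lambda>\<alpha>. \<Sum>i\<in>I. \<alpha> i) ` D}"
    using insert by (intro natset_plus) auto
  then show ?case by (rule natset_subset) (auto simp: insert.hyps)
qed

context scale begin

lemma gps_desc:
  fixes G :: "(nat \<Rightarrow> real) \<Rightarrow> 'k::comm_ring_1"
  assumes d: "M_gps_data M k G m"
  shows "\<exists>Gs \<Gamma> \<sigma>. sdesc M Gs \<Gamma> \<and> (\<forall>\<alpha>. monom k m \<alpha> = mon Gs (\<sigma> \<alpha>)) \<and>
     (\<forall>\<alpha> g. g \<notin> Gs \<longrightarrow> \<sigma> \<alpha> g = 0) \<and> supp (gps_eval k G m) \<subseteq> mon Gs ` \<Gamma>"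
proof -
  define Gs where "Gs = m ` {..k}"
  define \<sigma> where "\<sigma> \<alpha> g = (\<Sum>i\<in>{i\<in>{..k}. m i = g}. \<alpha> i)" for \<alpha> :: "nat \<Rightarrow> real" and g
  define \<Gamma> where "\<Gamma> = \<sigma> ` {\<alpha>. G \<alpha> \<noteq> 0}"
  have mM: "\<And>i. i \<le> k \<Longrightarrow> m i \<in> M \<and> gsmall (m i)" using d unfolding M_gps_data_def by auto
  have GsM: "Gs \<subseteq> M" using mM unfolding Gs_def by auto
  have gp: "\<And>g. g \<in> Gs \<Longrightarrow> gpos g" using GsM M_gpos by auto
  have mon: "monom k m \<alpha> = mon Gs (\<sigma> \<alpha>)" for \<alpha>
  proof -
    have "monom k m \<alpha> = (\<Prod>g\<in>Gs. \<Prod>i\<in>{i\<in>{..k}. m i = g}. gpowr (m i) (\<alpha> i))"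
      unfolding monom_def Gs_def by (rule prod.image_gen) simp
    also have "\<dots> = (\<Prod>g\<in>Gs. \<Prod>i\<in>{i\<in>{..k}. m i = g}. gpowr g (\<alpha> i))"
      by (intro prod.cong) auto
    also have "\<dots> = mon Gs (\<sigma> \<alpha>)" unfolding mon_def \<sigma>_def
      by (intro prod.cong refl prod_gpowr gp)
    finally show ?thesis .
  qed
  have \<sigma>0: "\<sigma> \<alpha> g = 0" if "g \<notin> Gs" for \<alpha> g
  proof -
    have e: "{i\<in>{..k}. m i = g} = {}" using that unfolding Gs_def by auto
    show ?thesis unfolding \<sigma>_def e by simp
  qed
  have gps: "gen_power_series k G" and ns: "natural_support k G" using d unfolding M_gps_data_def by auto
  have coord: "natset ((\<lambda>\<alpha>. \<alpha> i) ` {\<alpha>. G \<alpha> \<noteq> 0})" if "i \<le> k" for i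
    unfolding natset_def
  proof (intro conjI ballI allI)
    fix x assume "x \<in> (\<lambda>\<alpha>. \<alpha> i) ` {\<alpha>. G \<alpha> \<noteq> 0}"
    then show "0 \<le> x" using gps that unfolding gen_power_series_def by auto
  next
    fix a :: real
    show "finite ((\<lambda>\<alpha>. \<alpha> i) ` {\<alpha>. G \<alpha> \<noteq> 0} \<inter> {..<a})"
    proof (cases "a > 0")
      case True
      then have "finite ({\<alpha> i | \<alpha>. G \<alpha> \<noteq> 0} \<inter> {0..<a})" using ns that unfolding natural_support_def by blast
      moreover have "(\<lambda>\<alpha>. \<alpha> i) ` {\<alpha>. G \<alpha> \<noteq> 0} \<inter> {..<a} \<subseteq> {\<alpha> i | \<alpha>. G \<alpha> \<noteq> 0} \<inter> {0..<a}"
        using gps that unfolding gen_power_series_def by auto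
      ultimately show ?thesis by (rule finite_subset[rotated])
    next
      case False
      then have "(\<lambda>\<alpha>. \<alpha> i) ` {\<alpha>. G \<alpha> \<noteq> 0} \<inter> {..<a} = {}"
        using gps that unfolding gen_power_series_def by force
      then show ?thesis by simp
    qed
  qed
  have nat\<Gamma>: "natset ((\<lambda>e. e g) ` \<Gamma>)" if "g \<in> Gs" for g
  proof -
    have "natset ((\<lambda>\<alpha>. \<Sum>i\<in>{i\<in>{..k}. m i = g}. \<alpha> i) ` {\<alpha>. G \<alpha> \<noteq> 0})"
      by (intro natset_coord_sum coord) auto
    moreover have "(\<lambda>e. e g) ` \<Gamma> = (\<lambda>\<alpha>. \<Sum>i\<in>{i\<in>{..k}. m i = g}. \<alpha> i) ` {\<alpha>. G \<alpha> \<noteq> 0}"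
      unfolding \<Gamma>_def \<sigma>_def by (simp add: image_image)
    ultimately show ?thesis by simp
  qed
  have sd: "sdesc M Gs \<Gamma>"
    unfolding sdesc_def using GsM mM nat\<Gamma> \<sigma>0 unfolding Gs_def \<Gamma>_def by auto
  have "supp (gps_eval k G m) \<subseteq> mon Gs ` \<Gamma>"
  proof
    fix n assume "n \<in> supp (gps_eval k G m)"
    then have "{\<alpha>. G \<alpha> \<noteq> 0 \<and> monom k m \<alpha> = n} \<noteq> {}" unfolding supp_def gps_eval_def by force
    then obtain \<alpha> where "G \<alpha> \<noteq> 0" "monom k m \<alpha> = n" by blast
    then show "n \<in> mon Gs ` \<Gamma>" unfolding \<Gamma>_def using mon by auto
  qed
  then show ?thesis using sd mon \<sigma>0 by blast
qed

end

context scale begin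
lemma ps_desc:
  fixes F :: "germ \<Rightarrow> 'k::comm_ring_1"
  assumes "F \<in> power_series_ring M"
  shows "\<exists>Gs \<Gamma>. sdesc M Gs \<Gamma> \<and> supp F \<subseteq> mon Gs ` \<Gamma>"
  using assms gps_desc unfolding power_series_ring_def by blast

lemma laur_desc:
  fixes F :: "germ \<Rightarrow> 'k::comm_ring_1"
  assumes "F \<in> laurent_series_ring M"
  shows "\<exists>Gs \<Gamma> r. sdesc M Gs \<Gamma> \<and> supp F \<subseteq> {mon Gs r * mon Gs e | e. e \<in> \<Gamma>}"
proof -
  obtain k G m r0 where F: "F = ser_mult (mono_ser 1 (monom k m r0)) (gps_eval k G m)" and d: "M_gps_data M k G m"
    using assms unfolding laurent_series_ring_def by blast
  obtain Gs \<Gamma> \<sigma> where sd: "sdesc M Gs \<Gamma>" and mon: "\<forall>\<alpha>. monom k m \<alpha> = mon Gs (\<sigma> \<alpha>)"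
    and sp: "supp (gps_eval k G m) \<subseteq> mon Gs ` \<Gamma>"
    using gps_desc[OF d] by blast
  have gp: "\<And>g. g \<in> Gs \<Longrightarrow> gpos g" using sd M_gpos unfolding sdesc_def by auto
  let ?n = "mon Gs (\<sigma> r0)"
  have c: "gpos ?n" using mon_gpos gp by blast
  have "supp F \<subseteq> {?n * mon Gs e | e. e \<in> \<Gamma>}"
  proof
    fix u assume "u \<in> supp F"
    then have "gps_eval k G m (gpowr ?n (-1) * u) \<noteq> 0"
      unfolding F supp_def mon[rule_format] ser_mult_mono[OF c] by auto
    then obtain e where e: "e \<in> \<Gamma>" "gpowr ?n (-1) * u = mon Gs e" using sp unfolding supp_def by blast
    have "u = ?n * (gpowr ?n (-1) * u)" using gpowr_inv[OF c] by (simp add: mult.assoc[symmetric])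
    then show "u \<in> {?n * mon Gs e | e. e \<in> \<Gamma>}" using e by auto
  qed
  then show ?thesis using sd by blast
qed

end

context scale begin
lemma finite_max:
  assumes "finite X" "X \<noteq> {}" "X \<subseteq> M"
  shows "\<exists>x\<in>X. \<forall>y\<in>X. y \<preceq> x"
  using assms
proof (induction X rule: finite_ne_induct)
  case (singleton x) then show ?case by (auto simp: gle_refl)
next
  case (insert x F)
  then obtain y where y: "y \<in> F" "\<forall>z\<in>F. z \<preceq> y" by auto
  have "x \<in> M" "y \<in> M" using insert y by auto
  then have "x \<preceq> y \<or> y \<preceq> x" by (rule M_total)
  then show ?case
  proof
    assume "x \<preceq> y" then show ?thesis using y by auto
  next
    assume yx: "y \<preceq> x"
    have "\<forall>z\<in>insert x F. z \<preceq> x" using y yx gle_trans[of _ y x] gle_refl[of x] by blast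
    then show ?thesis by blast
  qed
qed

end

context scale begin
lemma desc_series:
  fixes F :: "germ \<Rightarrow> 'k::zero"
  assumes sd: "sdesc M Gs \<Gamma>" and cM: "c \<in> M" and sp: "supp F \<subseteq> {c * mon Gs e | e. e \<in> \<Gamma>}"
  shows "F \<in> series_set M"
proof -
  have fin: "finite Gs" and GM: "Gs \<subseteq> M" and sm: "\<forall>g\<in>Gs. gsmall g"
    and nat: "\<forall>g\<in>Gs. natset ((\<lambda>e. e g) ` \<Gamma>)"
    using sd unfolding sdesc_def by auto
  have gp: "\<And>g. g \<in> Gs \<Longrightarrow> gpos g" using GM M_gpos by auto
  have inM: "c * mon Gs e \<in> M" for e using cM mon_in_M[OF GM] M_mult by blast
  have "supp F \<subseteq> M"
  proof
    fix u assume "u \<in> supp F"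
    then obtain e where "u = c * mon Gs e" using sp by blast
    then show "u \<in> M" using inM by simp
  qed
  moreover have "\<exists>m\<in>S. \<forall>n\<in>S. n \<preceq> m" if S: "S \<subseteq> supp F" "S \<noteq> {}" for S
  proof -
    define D where "D = {e \<in> \<Gamma>. c * mon Gs e \<in> S}"
    have SD: "\<forall>s\<in>S. \<exists>e\<in>D. s = c * mon Gs e"
    proof
      fix s assume "s \<in> S"
      then obtain e where "e \<in> \<Gamma>" "s = c * mon Gs e" using S(1) sp by blast
      then show "\<exists>e\<in>D. s = c * mon Gs e" using \<open>s \<in> S\<close> unfolding D_def by blast
    qed
    have "\<forall>g\<in>Gs. \<forall>a. finite ((\<lambda>e. e g) ` D \<inter> {..<a})"
    proof (intro ballI allI)
      fix g a assume "g \<in> Gs"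
      then have "finite ((\<lambda>e. e g) ` \<Gamma> \<inter> {..<a})" using nat unfolding natset_def by blast
      then show "finite ((\<lambda>e. e g) ` D \<inter> {..<a})" by (rule finite_subset[rotated]) (auto simp: D_def)
    qed
    note fD = this
    have "\<exists>\<Phi>\<subseteq>D. finite \<Phi> \<and> (\<forall>e\<in>D. \<exists>\<phi>\<in>\<Phi>. \<forall>g\<in>Gs. \<phi> g \<le> e g)"
      by (rule dickson[OF fin fD])
    then obtain \<Phi> where \<Phi>: "\<Phi> \<subseteq> D" "finite \<Phi>" "\<forall>e\<in>D. \<exists>\<phi>\<in>\<Phi>. \<forall>g\<in>Gs. \<phi> g \<le> e g"
      by (elim exE conjE)
    obtain s0 where "s0 \<in> S" using S(2) by blast
    then obtain e0 where "e0 \<in> D" using SD by blast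
    then have "\<Phi> \<noteq> {}" using \<Phi>(3) by blast
    then have "\<exists>x\<in>(\<lambda>\<phi>. c * mon Gs \<phi>) ` \<Phi>. \<forall>y\<in>(\<lambda>\<phi>. c * mon Gs \<phi>) ` \<Phi>. y \<preceq> x"
      using \<Phi>(2) inM by (intro finite_max) auto
    then obtain x where x: "x \<in> (\<lambda>\<phi>. c * mon Gs \<phi>) ` \<Phi>" "\<forall>y\<in>(\<lambda>\<phi>. c * mon Gs \<phi>) ` \<Phi>. y \<preceq> x"
      by blast
    have "x \<in> S" using x(1) \<Phi>(1) unfolding D_def by auto
    moreover have "n \<preceq> x" if nS: "n \<in> S" for n
    proof -
      obtain e where e: "e \<in> D" "n = c * mon Gs e" using SD nS by blast
      obtain \<phi> where \<phi>: "\<phi> \<in> \<Phi>" "\<forall>g\<in>Gs. \<phi> g \<le> e g" using \<Phi>(3) e(1) by blast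
      have "mon Gs e \<preceq> mon Gs \<phi>" using \<phi>(2) gp sm by (intro mon_le) auto
      then have "n \<preceq> c * mon Gs \<phi>" unfolding e(2) using gle_mult[of "mon Gs e" "mon Gs \<phi>" c]
        by (simp add: mult.commute)
      moreover have "c * mon Gs \<phi> \<preceq> x" using x(2) \<phi>(1) by blast
      ultimately show ?thesis by (rule gle_trans)
    qed
    ultimately show ?thesis by blast
  qed
  ultimately show ?thesis unfolding series_set_def is_series_def by blast
qed

end

context scale begin

lemma lm_prop:
  fixes F :: "germ \<Rightarrow> 'k::zero"
  assumes "F \<in> series_set M" "F \<noteq> (\<lambda>_. 0)"
  shows "F (lm F) \<noteq> 0 \<and> (\<forall>n. F n \<noteq> 0 \<longrightarrow> n \<preceq> lm F)"
proof -
  have sM: "supp F \<subseteq> M" and wo: "\<And>S. S \<subseteq> supp F \<Longrightarrow> S \<noteq> {} \<Longrightarrow> \<exists>m\<in>S. \<forall>n\<in>S. n \<preceq> m"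
    using assms(1) unfolding series_set_def is_series_def by auto
  have "supp F \<noteq> {}" using assms(2) unfolding supp_def by auto
  then obtain m where m: "m \<in> supp F" "\<forall>n\<in>supp F. n \<preceq> m" using wo[of "supp F"] by blast
  have P: "F m \<noteq> 0 \<and> (\<forall>n. F n \<noteq> 0 \<longrightarrow> n \<preceq> m)" using m unfolding supp_def by auto
  have "lm F = m" unfolding lm_def
  proof (rule the_equality)
    show "F m \<noteq> 0 \<and> (\<forall>n. F n \<noteq> 0 \<longrightarrow> n \<preceq> m)" by (rule P)
  next
    fix m' assume m': "F m' \<noteq> 0 \<and> (\<forall>n. F n \<noteq> 0 \<longrightarrow> n \<preceq> m')"
    have "m' \<in> M" "m \<in> M" using m' m sM unfolding supp_def by auto
    moreover have "m' \<preceq> m" "m \<preceq> m'" using m' P by auto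
    ultimately show "m' = m" by (rule M_antisym)
  qed
  then show ?thesis using P by simp
qed

lemma laur_series:
  fixes F :: "germ \<Rightarrow> 'k::comm_ring_1"
  assumes "F \<in> laurent_series_ring M"
  shows "F \<in> series_set M"
proof -
  obtain Gs \<Gamma> r where sd: "sdesc M Gs \<Gamma>" and sp: "supp F \<subseteq> {mon Gs r * mon Gs e | e. e \<in> \<Gamma>}"
    using laur_desc[OF assms] by blast
  have "mon Gs r \<in> M" using sd mon_in_M unfolding sdesc_def by auto
  then show ?thesis using desc_series[OF sd _ sp] by blast
qed

lemma part1:
  fixes F :: "germ \<Rightarrow> 'k::field"
  assumes FL: "F \<in> laurent_series_ring M" and F0: "F \<noteq> (\<lambda>_. 0)"
  shows "\<exists>a E. a \<noteq> 0 \<and> E \<in> laurent_series_ring M \<and> (E = (\<lambda>_. 0) \<or> gsmall (lm E)) \<and>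
                   F = ser_mult (mono_ser a (lm F)) (\<lambda>n. one_ser n - E n)"
proof -
  have FS: "F \<in> series_set M" by (rule laur_series[OF FL])
  define q0 where "q0 = lm F"
  define a where "a = F q0"
  have q0: "F q0 \<noteq> 0" "\<forall>n. F n \<noteq> 0 \<longrightarrow> n \<preceq> q0" using lm_prop[OF FS F0] unfolding q0_def by auto
  have a0: "a \<noteq> 0" using q0 a_def by simp
  have sM: "supp F \<subseteq> M" using FS unfolding series_set_def is_series_def by auto
  have q0M: "q0 \<in> M" using q0 sM unfolding supp_def by auto
  have gq: "gpos q0" using M_gpos[OF q0M] .
  let ?i = "gpowr q0 (-1)"
  have qi: "q0 * ?i = 1" using gpowr_inv[OF gq] .
  define E where "E v = one_ser v - F (q0 * v) / a" for v
  have one: "one_ser v = (if v = 1 then 1 else 0)" for v :: germ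
    unfolding one_ser_def mono_ser_def by simp
  have eqF: "F = ser_mult (mono_ser a q0) (\<lambda>n. one_ser n - E n)"
  proof
    fix u
    have "q0 * (?i * u) = u" using qi by (simp add: mult.assoc[symmetric])
    then show "F u = ser_mult (mono_ser a q0) (\<lambda>n. one_ser n - E n) u"
      unfolding ser_mult_mono[OF gq] E_def using a0 by simp
  qed
  obtain Gs \<Gamma> r where sd: "sdesc M Gs \<Gamma>" and sp: "supp F \<subseteq> {mon Gs r * mon Gs e | e. e \<in> \<Gamma>}"
    using laur_desc[OF FL] by blast
  have gp: "\<And>g. g \<in> Gs \<Longrightarrow> gpos g" using sd M_gpos unfolding sdesc_def by auto
  obtain \<beta> where \<beta>: "\<beta> \<in> \<Gamma>" "q0 = mon Gs r * mon Gs \<beta>" using sp q0(1) unfolding supp_def by blast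
  have spE: "supp E \<subseteq> {mon Gs (\<lambda>g. - \<beta> g) * mon Gs e | e. e \<in> \<Gamma>}"
  proof
    fix v assume v: "v \<in> supp E"
    have "v \<noteq> 1"
    proof
      assume "v = 1" then have "E v = 0" unfolding E_def one using a0 a_def by simp
      then show False using v unfolding supp_def by simp
    qed
    then have "F (q0 * v) \<noteq> 0" using v unfolding supp_def E_def one by auto
    then obtain e where e: "e \<in> \<Gamma>" "q0 * v = mon Gs r * mon Gs e" using sp unfolding supp_def by blast
    have "mon Gs r * (mon Gs \<beta> * v) = mon Gs r * mon Gs e" using e(2) \<beta>(2) by (simp add: mult.assoc)
    then have "mon Gs \<beta> * v = mon Gs e" using gcancel mon_gpos gp by blast
    then have "mon Gs (\<lambda>g. - \<beta> g) * (mon Gs \<beta> * v) = mon Gs (\<lambda>g. - \<beta> g) * mon Gs e" by simp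
    moreover have "mon Gs (\<lambda>g. - \<beta> g) * (mon Gs \<beta> * v) = v"
      using mon_inv[of Gs \<beta>] gp by (metis mult.assoc mult.commute mult_1_left)
    ultimately show "v \<in> {mon Gs (\<lambda>g. - \<beta> g) * mon Gs e | e. e \<in> \<Gamma>}" using e(1) by auto
  qed
  have EL: "E \<in> laurent_series_ring M" by (rule crit_L[OF sd spE])
  have Esmall: "E = (\<lambda>_. 0) \<or> gsmall (lm E)"
  proof (cases "E = (\<lambda>_. 0)")
    case True then show ?thesis by simp
  next
    case False
    note E0 = False
    have ES: "E \<in> series_set M" by (rule laur_series[OF EL])
    define w where "w = lm E"
    have w: "E w \<noteq> 0" using lm_prop[OF ES E0] unfolding w_def by auto
    have wM: "w \<in> M" using w ES unfolding series_set_def is_series_def supp_def by auto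
    have w1: "w \<noteq> 1"
    proof
      assume "w = 1" then have "E w = 0" unfolding E_def one using a0 a_def by simp
      then show False using w by simp
    qed
    then have "F (q0 * w) \<noteq> 0" using w unfolding E_def one by auto
    then have "q0 * w \<preceq> q0" using q0(2) by blast
    then have "?i * (q0 * w) \<preceq> ?i * q0" using gle_mult[of "q0 * w" q0 ?i] by (simp add: mult.commute)
    moreover have "?i * (q0 * w) = w" using qi by (metis mult.assoc mult.commute mult_1_left)
    moreover have "?i * q0 = 1" using qi by (simp add: mult.commute)
    ultimately have "w \<preceq> 1" by simp
    then show ?thesis using M_small_iff[OF wM] w1 unfolding w_def by simp
  qed
  show ?thesis using a0 EL Esmall eqF unfolding q0_def a_def by blast
qed

end

lemma mon_cong: "(\<And>g. g \<in> Gs \<Longrightarrow> e g = e' g) \<Longrightarrow> mon Gs e = mon Gs e'"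
  unfolding mon_def by (intro prod.cong) auto

lemma sdesc_coord: assumes "sdesc M Gs \<Gamma>" shows "natset ((\<lambda>e. e g) ` \<Gamma>)"
proof (cases "g \<in> Gs")
  case True then show ?thesis using assms unfolding sdesc_def by auto
next
  case False
  then have "(\<lambda>e. e g) ` \<Gamma> \<subseteq> {0}" using assms unfolding sdesc_def by auto
  moreover have "natset {0}" by (intro natset_finite) auto
  ultimately show ?thesis using natset_subset by blast
qed

context scale begin

lemma part2a:
  fixes F :: "germ \<Rightarrow> 'k::comm_ring_1"
  assumes FL: "F \<in> laurent_series_ring M"
  shows "\<exists>P Q. P \<in> power_series_ring M \<and> Q \<in> power_series_ring M \<and> Q \<noteq> (\<lambda>_. 0) \<and> ser_mult Q F = P"
proof -
  obtain Gs \<Gamma> r where sd: "sdesc M Gs \<Gamma>" and sp: "supp F \<subseteq> {mon Gs r * mon Gs e | e. e \<in> \<Gamma>}"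
    using laur_desc[OF FL] by blast
  have gp: "\<And>g. g \<in> Gs \<Longrightarrow> gpos g" using sd M_gpos unfolding sdesc_def by auto
  define rn where "rn g = (if g \<in> Gs then max 0 (- r g) else 0)" for g
  define rp where "rp g = (if g \<in> Gs then max 0 (r g) else 0)" for g
  define Q :: "germ \<Rightarrow> 'k" where "Q = mono_ser 1 (mon Gs rn)"
  have sdQ: "sdesc M Gs {rn}"
    using sd unfolding sdesc_def
    by (auto simp: rn_def intro!: natset_finite)
  have QP: "Q \<in> power_series_ring M"
    by (rule crit_P[OF sdQ]) (auto simp: Q_def supp_def mono_ser_def)
  have Q0: "Q \<noteq> (\<lambda>_. 0)"
  proof
    assume "Q = (\<lambda>_. 0)"
    then have "Q (mon Gs rn) = 0" by simp
    then show False unfolding Q_def mono_ser_def by simp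
  qed
  define \<Gamma>' where "\<Gamma>' = (\<lambda>e g. rp g + e g) ` \<Gamma>"
  have sd': "sdesc M Gs \<Gamma>'"
    unfolding sdesc_def
  proof (intro conjI ballI allI impI)
    show "finite Gs" "Gs \<noteq> {}" "Gs \<subseteq> M" using sd unfolding sdesc_def by auto
  next
    fix g assume "g \<in> Gs" then show "gsmall g" using sd unfolding sdesc_def by auto
  next
    fix g assume g: "g \<in> Gs"
    have "natset ((+) (rp g) ` ((\<lambda>e. e g) ` \<Gamma>))"
      using sd g unfolding sdesc_def by (intro natset_shift) (auto simp: rp_def)
    moreover have "(\<lambda>e. e g) ` \<Gamma>' = (+) (rp g) ` ((\<lambda>e. e g) ` \<Gamma>)" unfolding \<Gamma>'_def by (auto simp: image_image)
    ultimately show "natset ((\<lambda>e. e g) ` \<Gamma>')" by simp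
  next
    fix e g assume "e \<in> \<Gamma>'" "g \<notin> Gs"
    then show "e g = 0" using sd unfolding \<Gamma>'_def sdesc_def rp_def by auto
  qed
  have cn: "gpos (mon Gs rn)" using mon_gpos gp by blast
  have spP: "supp (ser_mult Q F) \<subseteq> mon Gs ` \<Gamma>'"
  proof
    fix u assume "u \<in> supp (ser_mult Q F)"
    then have "F (gpowr (mon Gs rn) (-1) * u) \<noteq> 0" unfolding supp_def Q_def ser_mult_mono[OF cn] by auto
    then obtain e where e: "e \<in> \<Gamma>" "gpowr (mon Gs rn) (-1) * u = mon Gs r * mon Gs e"
      using sp unfolding supp_def by blast
    have "u = mon Gs rn * (gpowr (mon Gs rn) (-1) * u)" using gpowr_inv[OF cn] by (simp add: mult.assoc[symmetric])
    also have "\<dots> = mon Gs rn * mon Gs r * mon Gs e" using e(2) by (simp add: mult.assoc)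
    also have "\<dots> = mon Gs (\<lambda>g. rn g + r g + e g)" using gp by (simp add: mon_add)
    also have "\<dots> = mon Gs (\<lambda>g. rp g + e g)" by (rule mon_cong) (auto simp: rn_def rp_def)
    finally show "u \<in> mon Gs ` \<Gamma>'" using e(1) unfolding \<Gamma>'_def by auto
  qed
  have PP: "ser_mult Q F \<in> power_series_ring M" by (rule crit_P[OF sd' spP])
  show ?thesis using PP QP Q0 by blast
qed

end

lemma natset_UN: "finite I \<Longrightarrow> (\<And>i. i \<in> I \<Longrightarrow> natset (B i)) \<Longrightarrow> natset (\<Union>i\<in>I. B i)"
proof (induction I rule: finite_induct)
  case empty then show ?case by (simp add: natset_def)
next
  case (insert x F) then show ?case by (simp add: natset_union)
qed

context scale begin

lemma part2b:
  fixes F :: "germ \<Rightarrow> 'k::field"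
  assumes FS: "F \<in> series_set M" and PP: "P \<in> power_series_ring M" and QP: "Q \<in> power_series_ring M"
    and Q0: "Q \<noteq> (\<lambda>_. 0)" and eq: "ser_mult Q F = P"
  shows "F \<in> laurent_series_ring M"
proof -
  obtain Gs1 \<Gamma>1 where sd1: "sdesc M Gs1 \<Gamma>1" and sp1: "supp Q \<subseteq> mon Gs1 ` \<Gamma>1"
    using ps_desc[OF QP] by blast
  obtain Gs2 \<Gamma>2 where sd2: "sdesc M Gs2 \<Gamma>2" and sp2: "supp P \<subseteq> mon Gs2 ` \<Gamma>2"
    using ps_desc[OF PP] by blast
  have fin1: "finite Gs1" and ne1: "Gs1 \<noteq> {}" and M1: "Gs1 \<subseteq> M" and sm1: "\<forall>g\<in>Gs1. gsmall g"
    and z1: "\<forall>e\<in>\<Gamma>1. \<forall>g. g \<notin> Gs1 \<longrightarrow> e g = 0" using sd1 unfolding sdesc_def by auto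
  have fin2: "finite Gs2" and M2: "Gs2 \<subseteq> M" and sm2: "\<forall>g\<in>Gs2. gsmall g"
    and z2: "\<forall>e\<in>\<Gamma>2. \<forall>g. g \<notin> Gs2 \<longrightarrow> e g = 0" using sd2 unfolding sdesc_def by auto
  have gp1: "\<And>g. g \<in> Gs1 \<Longrightarrow> gpos g" using M1 M_gpos by auto
  have QS: "Q \<in> series_set M"
    by (rule desc_series[OF sd1 M_one]) (use sp1 in auto)
  define q0 where "q0 = lm Q"
  have q0: "Q q0 \<noteq> 0" "\<forall>n. Q n \<noteq> 0 \<longrightarrow> n \<preceq> q0" using lm_prop[OF QS Q0] unfolding q0_def by auto
  obtain \<beta> where \<beta>: "\<beta> \<in> \<Gamma>1" "q0 = mon Gs1 \<beta>" using sp1 q0(1) unfolding supp_def by blast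
  have q0M: "q0 \<in> M" using \<beta>(2) mon_in_M[OF M1] by simp
  have gq: "gpos q0" using M_gpos[OF q0M] .
  define c where "c = mon Gs1 (\<lambda>g. - \<beta> g)"
  have cM: "c \<in> M" unfolding c_def using mon_in_M[OF M1] by simp
  have cq: "c * q0 = 1" unfolding c_def \<beta>(2) using mon_inv[of Gs1 \<beta>] gp1 by (simp add: mult.commute)
  have suppQM: "p \<in> M" if "Q p \<noteq> 0" for p using QS that unfolding series_set_def is_series_def supp_def by auto
  define D' where "D' = {e \<in> \<Gamma>1. Q (mon Gs1 e) \<noteq> 0 \<and> mon Gs1 e \<noteq> q0}"
  have "\<forall>g\<in>Gs1. \<forall>a. finite ((\<lambda>e. e g) ` D' \<inter> {..<a})"
  proof (intro ballI allI)
    fix g a assume "g \<in> Gs1"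
    then have "finite ((\<lambda>e. e g) ` \<Gamma>1 \<inter> {..<a})" using sd1 unfolding sdesc_def natset_def by blast
    then show "finite ((\<lambda>e. e g) ` D' \<inter> {..<a})" by (rule finite_subset[rotated]) (auto simp: D'_def)
  qed
  note fD = this
  have "\<exists>\<Phi>\<subseteq>D'. finite \<Phi> \<and> (\<forall>e\<in>D'. \<exists>\<phi>\<in>\<Phi>. \<forall>g\<in>Gs1. \<phi> g \<le> e g)"
    by (rule dickson[OF fin1 fD])
  then obtain \<Phi> where \<Phi>: "\<Phi> \<subseteq> D'" "finite \<Phi>" "\<forall>e\<in>D'. \<exists>\<phi>\<in>\<Phi>. \<forall>g\<in>Gs1. \<phi> g \<le> e g"
    by (elim exE conjE)
  define n\<phi> where "n\<phi> \<phi> = mon Gs1 \<phi> * c" for \<phi>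
  have n\<phi>M: "n\<phi> \<phi> \<in> M" for \<phi> unfolding n\<phi>_def using mon_in_M[OF M1] cM M_mult by blast
  have n\<phi>small: "gsmall (n\<phi> \<phi>)" if "\<phi> \<in> \<Phi>" for \<phi>
  proof -
    have \<phi>D: "\<phi> \<in> D'" using that \<Phi>(1) by blast
    then have "mon Gs1 \<phi> \<preceq> q0" using q0(2) unfolding D'_def by blast
    then have "mon Gs1 \<phi> * c \<preceq> q0 * c" by (rule gle_mult)
    then have le: "n\<phi> \<phi> \<preceq> 1" unfolding n\<phi>_def using cq by (simp add: mult.commute)
    have ne: "n\<phi> \<phi> \<noteq> 1"
    proof
      assume "n\<phi> \<phi> = 1"
      then have "mon Gs1 \<phi> * c * q0 = q0" unfolding n\<phi>_def by simp
      then have "mon Gs1 \<phi> = q0" using cq by (simp add: mult.assoc)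
      then show False using \<phi>D unfolding D'_def by blast
    qed
    show ?thesis using M_small_iff[OF n\<phi>M] le ne by blast
  qed
  define Gs where "Gs = Gs1 \<union> Gs2 \<union> n\<phi> ` \<Phi>"
  have fin: "finite Gs" unfolding Gs_def using fin1 fin2 \<Phi>(2) by blast
  have GsM: "Gs \<subseteq> M" unfolding Gs_def using M1 M2 n\<phi>M by blast
  have gp: "\<And>g. g \<in> Gs \<Longrightarrow> gpos g" using GsM M_gpos by blast
  have smG: "\<forall>g\<in>Gs. gsmall g" unfolding Gs_def using sm1 sm2 n\<phi>small by blast
  define A where "A g = (\<lambda>e. e g) ` \<Gamma>2 \<union> (\<Union>\<phi>\<in>\<Phi>. {x - \<phi> g | x. x \<in> (\<lambda>e. e g) ` \<Gamma>1 \<and> \<phi> g \<le> x}) \<union> {0, 1}" for g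
  have natA: "natset (A g)" for g
  proof -
    have a1: "natset ((\<lambda>e. e g) ` \<Gamma>2)" by (rule sdesc_coord[OF sd2])
    have a2: "natset (\<Union>\<phi>\<in>\<Phi>. {x - \<phi> g | x. x \<in> (\<lambda>e. e g) ` \<Gamma>1 \<and> \<phi> g \<le> x})"
      by (rule natset_UN[OF \<Phi>(2)]) (rule natset_sub[OF sdesc_coord[OF sd1]])
    have a3: "natset {0, 1}" by (rule natset_finite) auto
    show ?thesis unfolding A_def by (intro natset_union a1 a2 a3)
  qed
  have "\<forall>g. \<exists>N. A g \<subseteq> N \<and> 0 \<in> N \<and> (\<forall>x\<in>N. \<forall>y\<in>N. x + y \<in> N) \<and> natset N"
    by (intro allI natset_closure natA)
  then have "\<exists>N. \<forall>g. A g \<subseteq> N g \<and> 0 \<in> N g \<and> (\<forall>x\<in>N g. \<forall>y\<in>N g. x + y \<in> N g) \<and> natset (N g)"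
    by (rule choice)
  then obtain N where N: "\<And>g. A g \<subseteq> N g \<and> 0 \<in> N g \<and> (\<forall>x\<in>N g. \<forall>y\<in>N g. x + y \<in> N g) \<and> natset (N g)"
    by blast
  define \<Gamma> where "\<Gamma> = {e. (\<forall>g\<in>Gs. e g \<in> N g) \<and> (\<forall>g. g \<notin> Gs \<longrightarrow> e g = 0)}"
  have sd: "sdesc M Gs \<Gamma>"
    unfolding sdesc_def
  proof (intro conjI ballI allI impI)
    show "finite Gs" by (rule fin)
    show "Gs \<noteq> {}" using ne1 unfolding Gs_def by blast
    show "Gs \<subseteq> M" by (rule GsM)
  next
    fix g assume "g \<in> Gs" then show "gsmall g" using smG by blast
  next
    fix g assume "g \<in> Gs"
    have sub: "(\<lambda>e. e g) ` \<Gamma> \<subseteq> N g" unfolding \<Gamma>_def using \<open>g \<in> Gs\<close> by auto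
    have "natset (N g)" using N[of g] by (elim conjE)
    then show "natset ((\<lambda>e. e g) ` \<Gamma>)" using sub by (rule natset_subset)
  next
    fix e g assume "e \<in> \<Gamma>" "g \<notin> Gs" then show "e g = 0" unfolding \<Gamma>_def by blast
  qed
  have G1: "Gs1 \<subseteq> Gs" and G2: "Gs2 \<subseteq> Gs" unfolding Gs_def by auto
  have cG: "c = mon Gs (\<lambda>g. - \<beta> g)" unfolding c_def
    by (rule mon_extend[symmetric, OF fin G1 _ gp]) (use z1 \<beta>(1) in auto)
  have \<Gamma>add: "(\<lambda>g. e g + d g) \<in> \<Gamma>" if "e \<in> \<Gamma>" "d \<in> \<Gamma>" for e d
  proof -
    have "(\<forall>g\<in>Gs. e g + d g \<in> N g)"
    proof
      fix g assume "g \<in> Gs"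
      then have "e g \<in> N g" "d g \<in> N g" using that unfolding \<Gamma>_def by auto
      moreover have "\<forall>x\<in>N g. \<forall>y\<in>N g. x + y \<in> N g" using N[of g] by (elim conjE)
      ultimately show "e g + d g \<in> N g" by blast
    qed
    moreover have "\<forall>g. g \<notin> Gs \<longrightarrow> e g + d g = 0" using that unfolding \<Gamma>_def by auto
    ultimately show ?thesis unfolding \<Gamma>_def by blast
  qed
  define S where "S = {c * mon Gs e | e. e \<in> \<Gamma>}"
  have i: "c * u \<in> S" if Pu: "P u \<noteq> 0" for u
  proof -
    obtain e2 where e2: "e2 \<in> \<Gamma>2" "u = mon Gs2 e2" using sp2 Pu unfolding supp_def by blast
    have "mon Gs e2 = mon Gs2 e2" using z2 e2(1) by (intro mon_extend[OF fin G2 _ gp]) auto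
    moreover have "e2 \<in> \<Gamma>"
      unfolding \<Gamma>_def mem_Collect_eq
    proof (intro conjI ballI allI impI)
      fix g assume "g \<in> Gs"
      have "e2 g \<in> A g" unfolding A_def using e2(1) by blast
      moreover have "A g \<subseteq> N g" using N[of g] by (elim conjE)
      ultimately show "e2 g \<in> N g" by blast
    next
      fix g assume "g \<notin> Gs"
      then have "g \<notin> Gs2" using G2 by blast
      then show "e2 g = 0" using z2 e2(1) by blast
    qed
    ultimately have "c * u = c * mon Gs e2" "e2 \<in> \<Gamma>" using e2(2) by simp_all
    then show ?thesis unfolding S_def by blast
  qed
  have ii: "v * (p * c) \<in> S" if vS: "v \<in> S" and Qp: "Q p \<noteq> 0" and pq: "p \<noteq> q0" for v p
  proof -
    obtain \<alpha> where \<alpha>: "\<alpha> \<in> \<Gamma>1" "p = mon Gs1 \<alpha>" using sp1 Qp unfolding supp_def by blast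
    have \<alpha>D: "\<alpha> \<in> D'" using \<alpha> Qp pq unfolding D'_def by auto
    obtain \<phi> where \<phi>: "\<phi> \<in> \<Phi>" "\<forall>g\<in>Gs1. \<phi> g \<le> \<alpha> g" using \<Phi>(3) \<alpha>D by blast
    have \<phi>1: "\<phi> \<in> \<Gamma>1" using \<phi>(1) \<Phi>(1) unfolding D'_def by blast
    define d1 where "d1 g = (if g \<in> Gs1 then \<alpha> g - \<phi> g else 0)" for g
    define d2 where "d2 g = (if g = n\<phi> \<phi> then 1 else (0::real))" for g
    have nG: "n\<phi> \<phi> \<in> Gs" unfolding Gs_def using \<phi>(1) by blast
    have m1: "mon Gs d1 = mon Gs1 (\<lambda>g. \<alpha> g - \<phi> g)"
    proof -
      have "mon Gs d1 = mon Gs1 d1" by (rule mon_extend[OF fin G1 _ gp]) (auto simp: d1_def)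
      also have "\<dots> = mon Gs1 (\<lambda>g. \<alpha> g - \<phi> g)" by (rule mon_cong) (simp add: d1_def)
      finally show ?thesis .
    qed
    have m2: "mon Gs d2 = n\<phi> \<phi>" unfolding d2_def by (rule mon_delta[OF fin nG gp])
    have "p = mon Gs1 (\<lambda>g. (\<alpha> g - \<phi> g) + \<phi> g)" using \<alpha>(2) by simp
    also have "\<dots> = mon Gs1 (\<lambda>g. \<alpha> g - \<phi> g) * mon Gs1 \<phi>" by (rule mon_add) (rule gp1)
    finally have "p * c = mon Gs d1 * n\<phi> \<phi>" unfolding m1 n\<phi>_def by (simp add: mult.assoc)
    also have "\<dots> = mon Gs (\<lambda>g. d1 g + d2 g)" using mon_add[of Gs d1 d2] gp m2 by simp
    finally have pc: "p * c = mon Gs (\<lambda>g. d1 g + d2 g)" .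
    have dG: "(\<lambda>g. d1 g + d2 g) \<in> \<Gamma>"
      unfolding \<Gamma>_def mem_Collect_eq
    proof (intro conjI ballI allI impI)
      fix g assume "g \<in> Gs"
      have "d1 g \<in> A g"
      proof (cases "g \<in> Gs1")
        case True
        have m: "\<alpha> g - \<phi> g \<in> {x - \<phi> g | x. x \<in> (\<lambda>e. e g) ` \<Gamma>1 \<and> \<phi> g \<le> x}"
          by (intro CollectI exI[of _ "\<alpha> g"]) (use \<alpha>(1) \<phi>(2) True in auto)
        have "\<alpha> g - \<phi> g \<in> (\<Union>\<phi>'\<in>\<Phi>. {x - \<phi>' g | x. x \<in> (\<lambda>e. e g) ` \<Gamma>1 \<and> \<phi>' g \<le> x})"
          unfolding UN_iff by (rule bexI[of _ \<phi>]) (rule m, rule \<phi>(1))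
        then have "\<alpha> g - \<phi> g \<in> A g" unfolding A_def by (rule UnI1[OF UnI2])
        moreover have "d1 g = \<alpha> g - \<phi> g" using True by (simp add: d1_def)
        ultimately show ?thesis by simp
      next
        case False then show ?thesis unfolding A_def d1_def by simp
      qed
      moreover have "d2 g \<in> A g" unfolding A_def d2_def by simp
      moreover have "A g \<subseteq> N g" using N[of g] by (elim conjE)
      moreover have "\<forall>x\<in>N g. \<forall>y\<in>N g. x + y \<in> N g" using N[of g] by (elim conjE)
      ultimately show "d1 g + d2 g \<in> N g" by (meson subsetD)
    next
      fix g assume "g \<notin> Gs"
      then have "g \<notin> Gs1" "g \<noteq> n\<phi> \<phi>" using G1 nG by auto
      then show "d1 g + d2 g = 0" unfolding d1_def d2_def by simp
    qed
    obtain e where e: "e \<in> \<Gamma>" "v = c * mon Gs e" using vS unfolding S_def by blast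
    have "v * (p * c) = c * mon Gs (\<lambda>g. e g + (d1 g + d2 g))"
      unfolding e(2) pc using mon_add[of Gs e "\<lambda>g. d1 g + d2 g"] gp by (simp add: mult.assoc)
    then show ?thesis unfolding S_def using \<Gamma>add[OF e(1) dG] by blast
  qed
  have FsM: "supp F \<subseteq> M" and Fwo: "\<And>X. X \<subseteq> supp F \<Longrightarrow> X \<noteq> {} \<Longrightarrow> \<exists>m\<in>X. \<forall>n\<in>X. n \<preceq> m"
    using FS unfolding series_set_def is_series_def by auto
  have main: "supp F \<subseteq> S"
  proof (rule ccontr)
    assume "\<not> supp F \<subseteq> S"
    then have "supp F - S \<noteq> {}" by blast
    then obtain u where u: "u \<in> supp F - S" "\<forall>n\<in>supp F - S. n \<preceq> u" using Fwo[of "supp F - S"] by blast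
    have uM: "u \<in> M" using u(1) FsM by blast
    have cu: "c * (q0 * u) = u" using cq by (simp add: mult.assoc[symmetric])
    have Zin: "p = q0 \<and> v = u" if Z: "Q p \<noteq> 0" "F v \<noteq> 0" "p * v = q0 * u" for p v
    proof -
      have "p = q0"
      proof (rule ccontr)
        assume pq: "p \<noteq> q0"
        have vM: "v \<in> M" using Z(2) FsM unfolding supp_def by blast
        have "p \<preceq> q0" using q0(2) Z(1) by blast
        then have "p * c \<preceq> q0 * c" by (rule gle_mult)
        then have t1: "p * c \<preceq> 1" using cq by (simp add: mult.commute)
        have ut: "u = v * (p * c)" using cu Z(3) by (metis mult.assoc mult.commute)
        have uv: "u \<preceq> v" using gle_mult[OF t1, of v] ut by (simp add: mult.commute)
        have "v \<in> S"
        proof (rule ccontr)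
          assume "v \<notin> S"
          then have "v \<in> supp F - S" using Z(2) unfolding supp_def by blast
          then have "v \<preceq> u" using u(2) by blast
          then have "u = v" using M_antisym[OF uM vM uv] by blast
          then have "v * (p * c) = v * 1" using ut by simp
          then have "p * c = 1" using gcancel[OF M_gpos[OF vM]] by blast
          then have "p * c * q0 = q0" by simp
          then have "p = q0" using cq by (simp add: mult.assoc)
          then show False using pq by blast
        qed
        then have "u \<in> S" using ii[OF _ Z(1) pq] ut by simp
        then show False using u(1) by blast
      qed
      moreover have "v = u" using Z(3) calculation gcancel[OF gq] by blast
      ultimately show ?thesis by blast
    qed
    have Zset: "{(p, v). Q p \<noteq> 0 \<and> F v \<noteq> 0 \<and> p * v = q0 * u} = {(q0, u)}"
      using Zin q0(1) u(1) unfolding supp_def by auto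
    have "P (q0 * u) = Q q0 * F u" unfolding eq[symmetric] ser_mult_def Zset by simp
    moreover have "F u \<noteq> 0" using u(1) unfolding supp_def by blast
    ultimately have "P (q0 * u) \<noteq> 0" using q0(1) by simp
    then have "c * (q0 * u) \<in> S" by (rule i)
    then show False using cu u(1) by simp
  qed
  have "supp F \<subseteq> {mon Gs (\<lambda>g. - \<beta> g) * mon Gs e | e. e \<in> \<Gamma>}" using main unfolding S_def cG .
  then show ?thesis by (rule crit_L[OF sd])
qed

end

theorem proposition5p11:
  fixes M :: "germ set"
  assumes "mult_R_subspace M" and "asymptotic_scale M"
  shows "(\<forall>F :: germ \<Rightarrow> 'k::field_char_0. F \<in> laurent_series_ring M \<and> F \<noteq> (\<lambda>_. 0) \<longrightarrow>
            (\<exists>a E. a \<noteq> 0 \<and> E \<in> laurent_series_ring M \<and> (E = (\<lambda>_. 0) \<or> gsmall (lm E)) \<and>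
                   F = ser_mult (mono_ser a (lm F)) (\<lambda>n. one_ser n - E n)))
       \<and> (laurent_series_ring M :: (germ \<Rightarrow> 'k) set) =
           {F \<in> series_set M. \<exists>P Q. P \<in> power_series_ring M \<and> Q \<in> power_series_ring M \<and>
                Q \<noteq> (\<lambda>_. 0) \<and> ser_mult Q F = P}"
proof -
  interpret scale M using assms by unfold_locales
  have p1: "\<forall>F :: germ \<Rightarrow> 'k::field_char_0. F \<in> laurent_series_ring M \<and> F \<noteq> (\<lambda>_. 0) \<longrightarrow>
            (\<exists>a E. a \<noteq> 0 \<and> E \<in> laurent_series_ring M \<and> (E = (\<lambda>_. 0) \<or> gsmall (lm E)) \<and>
                   F = ser_mult (mono_ser a (lm F)) (\<lambda>n. one_ser n - E n))"
    using part1 by blast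
  have p2: "(laurent_series_ring M :: (germ \<Rightarrow> 'k) set) =
           {F \<in> series_set M. \<exists>P Q. P \<in> power_series_ring M \<and> Q \<in> power_series_ring M \<and>
                Q \<noteq> (\<lambda>_. 0) \<and> ser_mult Q F = P}"
  proof (rule set_eqI)
    fix F :: "germ \<Rightarrow> 'k"
    show "F \<in> laurent_series_ring M \<longleftrightarrow> F \<in> {F \<in> series_set M. \<exists>P Q. P \<in> power_series_ring M \<and> Q \<in> power_series_ring M \<and>
                Q \<noteq> (\<lambda>_. 0) \<and> ser_mult Q F = P}"
    proof
      assume "F \<in> laurent_series_ring M"
      then show "F \<in> {F \<in> series_set M. \<exists>P Q. P \<in> power_series_ring M \<and> Q \<in> power_series_ring M \<and>
                Q \<noteq> (\<lambda>_. 0) \<and> ser_mult Q F = P}"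
        using laur_series part2a by blast
    next
      assume "F \<in> {F \<in> series_set M. \<exists>P Q. P \<in> power_series_ring M \<and> Q \<in> power_series_ring M \<and>
                Q \<noteq> (\<lambda>_. 0) \<and> ser_mult Q F = P}"
      then obtain P Q where "F \<in> series_set M" "P \<in> power_series_ring M" "Q \<in> power_series_ring M"
        "Q \<noteq> (\<lambda>_. 0)" "ser_mult Q F = P" by blast
      then show "F \<in> laurent_series_ring M" by (rule part2b)
    qed
  qed
  show ?thesis using p1 p2 by blast
qed

end
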